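(* (Explicit Rayleigh's Monotonicity Law I.) Let $\Gamma$ be a metrized graph and let $e_i$ be an edge of $\Gamma$ with end points $p_i,q_i$ and length $L_i$. If $e_i$ is not a bridge of $\Gamma$, then for any $s,t\in\Gamma-e_i$, $$r(s,t)=r_{\overline{\Gamma}_i}(s,t)+\frac{L_i+R_i}{L_iR_i}\big[j_{p_i}(q_i,s)-j_{p_i}(q_i,t)\big]^2=r_{\overline{\Gamma}_i}(s,t)+\frac{L_i}{R_i(L_i+R_i)}\big[j^{\Gamma-e_i}_{p_i}(q_i,s)-j^{\Gamma-e_i}_{p_i}(q_i,t)\big]^2.$$ In particular $r(s,t)\ge r_{\overline{\Gamma}_i}(s,t)$, with equality if and only if $j_{p_i}(q_i,s)=j_{p_i}(q_i,t)$. If $e_i$ is a bridge of $\Gamma$, then for $s,t\in\Gamma-e_i$: $r(s,t)=r_{\overline{\Gamma}_i}(s,t)$ when $s$ and $t$ lie in the same connected component of $\Gamma-e_i$, and $r(s,t)=r_{\overline{\Gamma}_i}(s,t)+L_i$ otherwise.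
   Context: A metrized graph $\Gamma$ is a finite connected graph (multiple edges and self-loops allowed) in which each edge is identified with a closed line segment of positive length. $\Gamma$ is regarded as a resistive electric circuit in which each edge is a resistor whose resistance equals its length. $r(x,y)$ is the effective resistance between $x$ and $y$; $j_z(x,y)$ is the voltage at $x$ when a unit current enters at $y$ and exits at $z$, with reference voltage $0$ at $z$. $\Gamma-e_i$ is obtained from $\Gamma$ by deleting the interior of $e_i$; $e_i$ is a bridge if $\Gamma-e_i$ is disconnected; for a non-bridge $e_i$, $R_i:=r_{\Gamma-e_i}(p_i,q_i)$. $\overline{\Gamma}_i$ is the metrized graph obtained from $\Gamma$ by contracting the edge $e_i$ to a point (so $p_i=q_i$ in $\overline{\Gamma}_i$). Subscripts/superscripts indicate the graph on which resistance/voltage functions are computed. *)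

theory Defs
  imports Complex_Main
begin

text \<open>A model of a metrized graph: finite vertex set, finite edge set (multiple edges and
self-loops allowed), each edge e has endpoints ends e = (p,q) and a positive length.
The edge e is identified with the segment [0, len e], parameter 0 at p and len e at q.\<close>

record ('v, 'e) mgraph =
  verts :: "'v set"
  edges :: "'e set"
  ends  :: "'e \<Rightarrow> 'v \<times> 'v"
  len   :: "'e \<Rightarrow> real"

text \<open>Points of the metrized graph: vertices, or interior points of edges
(Pt e a is the point at distance a from the first endpoint of e, 0 < a < len e).\<close>

datatype ('v, 'e) pt = Vtx 'v | Pt 'e real

definition wf_graph :: "('v, 'e) mgraph \<Rightarrow> bool" where
  "wf_graph G \<longleftrightarrow> finite (verts G) \<and> finite (edges G) \<and> verts G \<noteq> {} \<and>
     (\<forall>e\<in>edges G. fst (ends G e) \<in> verts G \<and> snd (ends G e) \<in> verts G \<and> len G e > 0)"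

definition points :: "('v, 'e) mgraph \<Rightarrow> ('v, 'e) pt set" where
  "points G = Vtx ` verts G \<union> {Pt e a | e a. e \<in> edges G \<and> 0 < a \<and> a < len G e}"

definition vadj :: "('v, 'e) mgraph \<Rightarrow> 'v \<Rightarrow> 'v \<Rightarrow> bool" where
  "vadj G u v \<longleftrightarrow> (\<exists>e\<in>edges G. ends G e = (u, v) \<or> ends G e = (v, u))"

definition connected_graph :: "('v, 'e) mgraph \<Rightarrow> bool" where
  "connected_graph G \<longleftrightarrow> (\<forall>u\<in>verts G. \<forall>v\<in>verts G. (vadj G)\<^sup>*\<^sup>* u v)"

definition metrized_graph :: "('v, 'e) mgraph \<Rightarrow> bool" where
  "metrized_graph G \<longleftrightarrow> wf_graph G \<and> connected_graph G"

definition edge_fun :: "('v, 'e) mgraph \<Rightarrow> (('v, 'e) pt \<Rightarrow> real) \<Rightarrow> 'e \<Rightarrow> real \<Rightarrow> real" where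
  "edge_fun G f e a =
     (if a \<le> 0 then f (Vtx (fst (ends G e)))
      else if a \<ge> len G e then f (Vtx (snd (ends G e)))
      else f (Pt e a))"

text \<open>Continuous piecewise-linear functions on the metrized graph (continuity is built in,
since the affine pieces live on closed subsegments and the values at segment ends are the
vertex values).\<close>

definition cpwl :: "('v, 'e) mgraph \<Rightarrow> (('v, 'e) pt \<Rightarrow> real) \<Rightarrow> bool" where
  "cpwl G f \<longleftrightarrow> (\<forall>e\<in>edges G. \<exists>P. finite P \<and>
     (\<forall>a b. 0 \<le> a \<and> a < b \<and> b \<le> len G e \<and> {a<..<b} \<inter> P = {} \<longrightarrow>
        (\<exists>\<alpha> \<beta>. \<forall>x\<in>{a..b}. edge_fun G f e x = \<alpha> + \<beta> * x)))"

definition dslope_right :: "(real \<Rightarrow> real) \<Rightarrow> real \<Rightarrow> real" where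
  "dslope_right g a = Lim (at_right 0) (\<lambda>h. (g (a + h) - g a) / h)"

definition dslope_left :: "(real \<Rightarrow> real) \<Rightarrow> real \<Rightarrow> real" where
  "dslope_left g a = Lim (at_right 0) (\<lambda>h. (g (a - h) - g a) / h)"

text \<open>Sum of the outgoing directional derivatives of f at a point x (= - Laplacian of f at x).
A self-loop at v contributes two directions.\<close>

definition outflux :: "('v, 'e) mgraph \<Rightarrow> (('v, 'e) pt \<Rightarrow> real) \<Rightarrow> ('v, 'e) pt \<Rightarrow> real" where
  "outflux G f x = (case x of
      Vtx v \<Rightarrow> (\<Sum>e\<in>{e\<in>edges G. fst (ends G e) = v}. dslope_right (edge_fun G f e) 0)
             + (\<Sum>e\<in>{e\<in>edges G. snd (ends G e) = v}. dslope_left (edge_fun G f e) (len G e))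
    | Pt e a \<Rightarrow> dslope_right (edge_fun G f e) a + dslope_left (edge_fun G f e) a)"

text \<open>f is the voltage function when a unit current enters at y and exits at z,
with reference voltage 0 at z: Laplacian f = delta_y - delta_z.\<close>

definition is_voltage :: "('v, 'e) mgraph \<Rightarrow> ('v, 'e) pt \<Rightarrow> ('v, 'e) pt \<Rightarrow> (('v, 'e) pt \<Rightarrow> real) \<Rightarrow> bool" where
  "is_voltage G y z f \<longleftrightarrow> cpwl G f \<and> f z = 0 \<and> (\<forall>x. x \<notin> points G \<longrightarrow> f x = 0) \<and>
     (\<forall>x\<in>points G. outflux G f x = (if x = z then 1 else 0) - (if x = y then 1 else 0))"

text \<open>jv G z x y = j_z(x,y): voltage at x when unit current enters at y and exits at z.\<close>

definition jv :: "('v, 'e) mgraph \<Rightarrow> ('v, 'e) pt \<Rightarrow> ('v, 'e) pt \<Rightarrow> ('v, 'e) pt \<Rightarrow> real" where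
  "jv G z x y = (THE f. is_voltage G y z f) x"

definition reff :: "('v, 'e) mgraph \<Rightarrow> ('v, 'e) pt \<Rightarrow> ('v, 'e) pt \<Rightarrow> real" where
  "reff G x y = jv G y x x"

definition del_edge :: "('v, 'e) mgraph \<Rightarrow> 'e \<Rightarrow> ('v, 'e) mgraph" where
  "del_edge G e = G\<lparr>edges := edges G - {e}\<rparr>"

definition is_bridge :: "('v, 'e) mgraph \<Rightarrow> 'e \<Rightarrow> bool" where
  "is_bridge G e \<longleftrightarrow> \<not> connected_graph (del_edge G e)"

definition cmap :: "('v, 'e) mgraph \<Rightarrow> 'e \<Rightarrow> 'v \<Rightarrow> 'v" where
  "cmap G e v = (if v = snd (ends G e) then fst (ends G e) else v)"

definition contract :: "('v, 'e) mgraph \<Rightarrow> 'e \<Rightarrow> ('v, 'e) mgraph" where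
  "contract G e = \<lparr>verts = cmap G e ` verts G, edges = edges G - {e},
     ends = (\<lambda>d. map_prod (cmap G e) (cmap G e) (ends G d)), len = len G\<rparr>"

definition cpt :: "('v, 'e) mgraph \<Rightarrow> 'e \<Rightarrow> ('v, 'e) pt \<Rightarrow> ('v, 'e) pt" where
  "cpt G e x = (case x of Vtx v \<Rightarrow> Vtx (cmap G e v) | Pt d a \<Rightarrow> Pt d a)"

definition anchor :: "('v, 'e) mgraph \<Rightarrow> ('v, 'e) pt \<Rightarrow> 'v" where
  "anchor G x = (case x of Vtx v \<Rightarrow> v | Pt e a \<Rightarrow> fst (ends G e))"

definition same_comp :: "('v, 'e) mgraph \<Rightarrow> ('v, 'e) pt \<Rightarrow> ('v, 'e) pt \<Rightarrow> bool" where
  "same_comp G s t \<longleftrightarrow> (vadj G)\<^sup>*\<^sup>* (anchor G s) (anchor G t)"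

end

theory Submission
  imports Defs
begin


definition aff :: "(real \<Rightarrow> real) \<Rightarrow> real \<Rightarrow> real \<Rightarrow> bool" where
  "aff \<phi> c d \<longleftrightarrow> (\<exists>\<alpha> \<beta>. \<forall>x\<in>{c..d}. \<phi> x = \<alpha> + \<beta> * x)"

lemma dR_aff:
  assumes "a \<le> x" "x < b" "\<forall>y\<in>{a..b}. \<phi> y = \<alpha> + \<beta> * y"
  shows "dslope_right \<phi> x = \<beta>"
proof -
  have ev: "eventually (\<lambda>h. (\<phi> (x + h) - \<phi> x) / h = \<beta>) (at_right 0)"
    unfolding eventually_at_right_field
  proof (intro exI[of _ "b - x"] conjI allI impI)
    fix h :: real assume "0 < h" "h < b - x"
    then have "\<phi> (x + h) = \<alpha> + \<beta> * (x + h)" "\<phi> x = \<alpha> + \<beta> * x" using assms by auto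
    then have "\<phi> (x + h) - \<phi> x = \<beta> * h" by (simp add: algebra_simps)
    then show "(\<phi> (x + h) - \<phi> x) / h = \<beta>" using \<open>0 < h\<close> by simp
  qed (use assms in auto)
  show ?thesis unfolding dslope_right_def
    by (rule tendsto_Lim) (auto intro: tendsto_eventually[OF ev])
qed

lemma dL_aff:
  assumes "a < x" "x \<le> b" "\<forall>y\<in>{a..b}. \<phi> y = \<alpha> + \<beta> * y"
  shows "dslope_left \<phi> x = - \<beta>"
proof -
  have ev: "eventually (\<lambda>h. (\<phi> (x - h) - \<phi> x) / h = - \<beta>) (at_right 0)"
    unfolding eventually_at_right_field
  proof (intro exI[of _ "x - a"] conjI allI impI)
    fix h :: real assume "0 < h" "h < x - a"
    then have "\<phi> (x - h) = \<alpha> + \<beta> * (x - h)" "\<phi> x = \<alpha> + \<beta> * x" using assms by auto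
    then have "\<phi> (x - h) - \<phi> x = - \<beta> * h" by (simp add: algebra_simps)
    then show "(\<phi> (x - h) - \<phi> x) / h = - \<beta>" using \<open>0 < h\<close> by simp
  qed (use assms in auto)
  show ?thesis unfolding dslope_left_def
    by (rule tendsto_Lim) (auto intro: tendsto_eventually[OF ev])
qed

definition pa :: "real set \<Rightarrow> (real \<Rightarrow> real) \<Rightarrow> real \<Rightarrow> real \<Rightarrow> bool" where
  "pa W \<phi> a b \<longleftrightarrow> (\<forall>c d. a \<le> c \<and> c < d \<and> d \<le> b \<and> {c<..<d} \<inter> W = {} \<longrightarrow>
        (\<exists>\<alpha> \<beta>. \<forall>x\<in>{c..d}. \<phi> x = \<alpha> + \<beta> * x))"

lemma pa_mono: "pa W \<phi> a b \<Longrightarrow> W \<subseteq> W' \<Longrightarrow> pa W' \<phi> a b"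
  unfolding pa_def by blast

lemma pa_sub: "pa W \<phi> a b \<Longrightarrow> a \<le> a' \<Longrightarrow> b' \<le> b \<Longrightarrow> pa W \<phi> a' b'"
  unfolding pa_def by (meson order_trans)

lemma right_gap:
  fixes W :: "real set"
  assumes "finite W" "x < b"
  shows "\<exists>b'. x < b' \<and> b' \<le> b \<and> {x<..<b'} \<inter> W = {}"
proof -
  let ?M = "insert b {y\<in>W. x < y}"
  have fin: "finite ?M" using assms by auto
  have "x < Min ?M" using fin assms by (subst Min_gr_iff) auto
  moreover have "Min ?M \<le> b" using fin by (intro Min_le) auto
  moreover have "{x<..<Min ?M} \<inter> W = {}"
  proof (rule ccontr)
    assume "{x<..<Min ?M} \<inter> W \<noteq> {}"
    then obtain y where "y \<in> W" "x < y" "y < Min ?M" by auto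
    moreover have "Min ?M \<le> y" using fin \<open>y \<in> W\<close> \<open>x < y\<close> by (intro Min_le) auto
    ultimately show False by simp
  qed
  ultimately show ?thesis by blast
qed

lemma left_gap:
  fixes W :: "real set"
  assumes "finite W" "a < x"
  shows "\<exists>a'. a' < x \<and> a \<le> a' \<and> {a'<..<x} \<inter> W = {}"
proof -
  let ?M = "insert a {y\<in>W. y < x}"
  have fin: "finite ?M" using assms by auto
  have "Max ?M < x" using fin assms by (subst Max_less_iff) auto
  moreover have "a \<le> Max ?M" using fin by (intro Max_ge) auto
  moreover have "{Max ?M<..<x} \<inter> W = {}"
  proof (rule ccontr)
    assume "{Max ?M<..<x} \<inter> W \<noteq> {}"
    then obtain y where "y \<in> W" "y < x" "Max ?M < y" by auto
    moreover have "y \<le> Max ?M" using fin \<open>y \<in> W\<close> \<open>y < x\<close> by (intro Max_ge) auto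
    ultimately show False by simp
  qed
  ultimately show ?thesis by blast
qed

lemma pa_right:
  assumes "finite W" "pa W \<phi> a b" "a \<le> x" "x < b"
  shows "\<exists>b' \<alpha> \<beta>. x < b' \<and> b' \<le> b \<and> (\<forall>y\<in>{x..b'}. \<phi> y = \<alpha> + \<beta> * y)"
proof -
  obtain b' where "x < b'" "b' \<le> b" "{x<..<b'} \<inter> W = {}" using right_gap[OF assms(1,4)] by blast
  then show ?thesis using assms(2,3) unfolding pa_def by blast
qed

lemma pa_left:
  assumes "finite W" "pa W \<phi> a b" "a < x" "x \<le> b"
  shows "\<exists>a' \<alpha> \<beta>. a' < x \<and> a \<le> a' \<and> (\<forall>y\<in>{a'..x}. \<phi> y = \<alpha> + \<beta> * y)"
proof -
  obtain a' where "a' < x" "a \<le> a'" "{a'<..<x} \<inter> W = {}" using left_gap[OF assms(1,3)] by blast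
  then show ?thesis using assms(2,4) unfolding pa_def by blast
qed

definition GE :: "real set \<Rightarrow> (real \<Rightarrow> real) \<Rightarrow> (real \<Rightarrow> real) \<Rightarrow> real \<Rightarrow> real \<Rightarrow> real" where
  "GE W \<phi> \<psi> a b = \<psi> a * dslope_right \<phi> a + \<psi> b * dslope_left \<phi> b +
     (\<Sum>x\<in>W \<inter> {a<..<b}. \<psi> x * (dslope_right \<phi> x + dslope_left \<phi> x))"

lemma GE_split:
  assumes "finite W" "c \<in> W" "a < c" "c < b"
  shows "GE W \<phi> \<psi> a b = GE W \<phi> \<psi> a c + GE W \<phi> \<psi> c b"
proof -
  have eq: "W \<inter> {a<..<b} = insert c ((W \<inter> {a<..<c}) \<union> (W \<inter> {c<..<b}))" using assms by auto
  have d: "(W \<inter> {a<..<c}) \<inter> (W \<inter> {c<..<b}) = {}" by auto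
  have "c \<notin> (W \<inter> {a<..<c}) \<union> (W \<inter> {c<..<b})" by auto
  then show ?thesis unfolding GE_def eq using assms(1) d
    by (simp add: sum.union_disjoint algebra_simps)
qed

lemma GE_main:
  assumes "finite W" "a < b" "pa W \<phi> a b" "pa W \<psi> a b"
  shows "GE W \<phi> \<psi> a b = GE W \<psi> \<phi> a b \<and> GE W \<phi> \<phi> a b \<le> 0 \<and>
         (GE W \<phi> \<phi> a b = 0 \<longrightarrow> (\<forall>x\<in>{a..b}. \<phi> x = \<phi> a))"
  using assms(2-4)
proof (induction "card (W \<inter> {a<..<b})" arbitrary: a b rule: less_induct)
  case less
  note ab0 = less.prems(1)
  show ?case
  proof (cases "W \<inter> {a<..<b} = {}")
    case True
    have T: "{a<..<b} \<inter> W = {}" using True by blast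
    obtain \<alpha> \<beta> where ab: "\<forall>x\<in>{a..b}. \<phi> x = \<alpha> + \<beta> * x"
      using less.prems(2) ab0 T unfolding pa_def by blast
    obtain \<gamma> \<delta> where cd: "\<forall>x\<in>{a..b}. \<psi> x = \<gamma> + \<delta> * x"
      using less.prems(3) ab0 T unfolding pa_def by blast
    have d1: "dslope_right \<phi> a = \<beta>" "dslope_left \<phi> b = - \<beta>"
      using dR_aff[OF _ _ ab] dL_aff[OF _ _ ab] ab0 by auto
    have d2: "dslope_right \<psi> a = \<delta>" "dslope_left \<psi> b = - \<delta>"
      using dR_aff[OF _ _ cd] dL_aff[OF _ _ cd] ab0 by auto
    have pa: "\<phi> a = \<alpha> + \<beta> * a" "\<phi> b = \<alpha> + \<beta> * b" "\<psi> a = \<gamma> + \<delta> * a" "\<psi> b = \<gamma> + \<delta> * b"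
      using ab cd ab0 by auto
    have g1: "GE W \<phi> \<psi> a b = - \<beta> * \<delta> * (b - a)"
      unfolding GE_def True using d1 pa by (simp add: algebra_simps)
    have g2: "GE W \<psi> \<phi> a b = - \<beta> * \<delta> * (b - a)"
      unfolding GE_def True using d2 pa by (simp add: algebra_simps)
    have g3: "GE W \<phi> \<phi> a b = - (\<beta> * \<beta> * (b - a))"
      unfolding GE_def True using d1 pa by (simp add: algebra_simps)
    have bb: "0 \<le> \<beta> * \<beta> * (b - a)" using ab0 by simp
    have "GE W \<phi> \<phi> a b \<le> 0" unfolding g3 using bb by linarith
    moreover have "GE W \<phi> \<phi> a b = 0 \<longrightarrow> (\<forall>x\<in>{a..b}. \<phi> x = \<phi> a)"
    proof
      assume "GE W \<phi> \<phi> a b = 0"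
      then have "\<beta> * \<beta> * (b - a) = 0" unfolding g3 by linarith
      then have "\<beta> = 0" using ab0 by (simp add: mult_eq_0_iff)
      show "\<forall>x\<in>{a..b}. \<phi> x = \<phi> a"
      proof
        fix x assume "x \<in> {a..b}"
        then have "\<phi> x = \<alpha> + \<beta> * x" using ab by blast
        then show "\<phi> x = \<phi> a" using pa(1) \<open>\<beta> = 0\<close> by simp
      qed
    qed
    ultimately show ?thesis using g1 g2 by (simp only: simp_thms)
  next
    case False
    then obtain c where c: "c \<in> W" "a < c" "c < b" by auto
    have fin: "finite (W \<inter> {a<..<b})" using assms(1) by auto
    have lt1: "card (W \<inter> {a<..<c}) < card (W \<inter> {a<..<b})"
      using c by (intro psubset_card_mono[OF fin]) auto
    have lt2: "card (W \<inter> {c<..<b}) < card (W \<inter> {a<..<b})"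
      using c by (intro psubset_card_mono[OF fin]) auto
    have p1: "pa W \<phi> a c" "pa W \<psi> a c" using pa_sub[OF less.prems(2)] pa_sub[OF less.prems(3)] c by auto
    have p2: "pa W \<phi> c b" "pa W \<psi> c b" using pa_sub[OF less.prems(2)] pa_sub[OF less.prems(3)] c by auto
    have IH1: "GE W \<phi> \<psi> a c = GE W \<psi> \<phi> a c \<and> GE W \<phi> \<phi> a c \<le> 0 \<and>
         (GE W \<phi> \<phi> a c = 0 \<longrightarrow> (\<forall>x\<in>{a..c}. \<phi> x = \<phi> a))"
      using less.hyps[OF lt1 c(2) p1] .
    have IH2: "GE W \<phi> \<psi> c b = GE W \<psi> \<phi> c b \<and> GE W \<phi> \<phi> c b \<le> 0 \<and>
         (GE W \<phi> \<phi> c b = 0 \<longrightarrow> (\<forall>x\<in>{c..b}. \<phi> x = \<phi> c))"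
      using less.hyps[OF lt2 c(3) p2] .
    have s1: "GE W \<phi> \<psi> a b = GE W \<phi> \<psi> a c + GE W \<phi> \<psi> c b" by (rule GE_split[OF assms(1) c])
    have s2: "GE W \<psi> \<phi> a b = GE W \<psi> \<phi> a c + GE W \<psi> \<phi> c b" by (rule GE_split[OF assms(1) c])
    have s3: "GE W \<phi> \<phi> a b = GE W \<phi> \<phi> a c + GE W \<phi> \<phi> c b" by (rule GE_split[OF assms(1) c])
    have "GE W \<phi> \<phi> a b = 0 \<longrightarrow> (\<forall>x\<in>{a..b}. \<phi> x = \<phi> a)"
    proof
      assume z: "GE W \<phi> \<phi> a b = 0"
      then have z1: "GE W \<phi> \<phi> a c = 0" and z2: "GE W \<phi> \<phi> c b = 0" using s3 IH1 IH2 by linarith+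
      have e1: "\<forall>x\<in>{a..c}. \<phi> x = \<phi> a" using IH1 z1 by blast
      have e2: "\<forall>x\<in>{c..b}. \<phi> x = \<phi> c" using IH2 z2 by blast
      have "c \<in> {a..c}" using c by simp
      then have "\<phi> c = \<phi> a" using e1 by blast
      show "\<forall>x\<in>{a..b}. \<phi> x = \<phi> a"
      proof
        fix x assume "x \<in> {a..b}"
        show "\<phi> x = \<phi> a"
        proof (cases "x \<le> c")
          case True
          then have "x \<in> {a..c}" using \<open>x \<in> {a..b}\<close> by simp
          then show ?thesis using e1 by blast
        next
          case False
          then have "x \<in> {c..b}" using \<open>x \<in> {a..b}\<close> by simp
          then have "\<phi> x = \<phi> c" using e2 by blast
          then show ?thesis using \<open>\<phi> c = \<phi> a\<close> by simp
        qed
      qed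
    qed
    then show ?thesis using s1 s2 s3 IH1 IH2 by linarith
  qed
qed



definition hc :: "('v,'e) mgraph \<Rightarrow> (('v,'e) pt \<Rightarrow> real) \<Rightarrow> (('v,'e) pt \<Rightarrow> real) \<Rightarrow> bool" where
  "hc G f c \<longleftrightarrow> cpwl G f \<and> (\<forall>x. x \<notin> points G \<longrightarrow> f x = 0) \<and> (\<forall>x\<in>points G. outflux G f x = c x)"

definition chg :: "('v,'e) pt \<Rightarrow> ('v,'e) pt \<Rightarrow> ('v,'e) pt \<Rightarrow> real" where
  "chg y z x = (if x = z then 1 else 0) - (if x = y then 1 else 0)"

definition ind :: "('v,'e) mgraph \<Rightarrow> ('v,'e) pt \<Rightarrow> real" where
  "ind G x = (if x \<in> points G then 1 else 0)"

lemma wfD: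
  assumes "wf_graph G" "d \<in> edges G"
  shows "len G d > 0" "fst (ends G d) \<in> verts G" "snd (ends G d) \<in> verts G"
  using assms unfolding wf_graph_def by auto

lemma wf_fin: "wf_graph G \<Longrightarrow> finite (edges G)" "wf_graph G \<Longrightarrow> finite (verts G)"
  unfolding wf_graph_def by auto

lemma cpwl_pa: "cpwl G f \<longleftrightarrow> (\<forall>d\<in>edges G. \<exists>P. finite P \<and> pa P (edge_fun G f d) 0 (len G d))"
  unfolding cpwl_def pa_def by simp

lemma pa_right2:
  assumes "finite P" "pa P \<phi> l u" "pa P \<psi> l u" "l \<le> x" "x < u"
  shows "\<exists>b' \<alpha> \<beta> \<gamma> \<delta>. x < b' \<and> b' \<le> u \<and> (\<forall>y\<in>{x..b'}. \<phi> y = \<alpha> + \<beta> * y) \<and> (\<forall>y\<in>{x..b'}. \<psi> y = \<gamma> + \<delta> * y)"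
proof -
  obtain b' where b: "x < b'" "b' \<le> u" "{x<..<b'} \<inter> P = {}" using right_gap[OF assms(1,5)] by blast
  then show ?thesis using assms(2-4) unfolding pa_def by (metis (no_types, lifting))
qed

lemma pa_left2:
  assumes "finite P" "pa P \<phi> l u" "pa P \<psi> l u" "l < x" "x \<le> u"
  shows "\<exists>a' \<alpha> \<beta> \<gamma> \<delta>. a' < x \<and> l \<le> a' \<and> (\<forall>y\<in>{a'..x}. \<phi> y = \<alpha> + \<beta> * y) \<and> (\<forall>y\<in>{a'..x}. \<psi> y = \<gamma> + \<delta> * y)"
proof -
  obtain a' where b: "a' < x" "l \<le> a'" "{a'<..<x} \<inter> P = {}" using left_gap[OF assms(1,4)] by blast
  then show ?thesis using assms(2,3,5) unfolding pa_def by (metis (no_types, lifting))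
qed

lemma dR_lin:
  assumes "finite P" "pa P \<phi> l u" "pa P \<psi> l u" "l \<le> x" "x < u"
  shows "dslope_right (\<lambda>y. a * \<phi> y + b * \<psi> y) x = a * dslope_right \<phi> x + b * dslope_right \<psi> x"
proof -
  obtain b' \<alpha> \<beta> \<gamma> \<delta> where h: "x < b'" "(\<forall>y\<in>{x..b'}. \<phi> y = \<alpha> + \<beta> * y)" "(\<forall>y\<in>{x..b'}. \<psi> y = \<gamma> + \<delta> * y)"
    using pa_right2[OF assms] by blast
  have h3: "\<forall>y\<in>{x..b'}. a * \<phi> y + b * \<psi> y = (a * \<alpha> + b * \<gamma>) + (a * \<beta> + b * \<delta>) * y"
    using h by (simp add: algebra_simps)
  show ?thesis using dR_aff[OF _ h(1) h(2)] dR_aff[OF _ h(1) h(3)] dR_aff[OF _ h(1) h3] by simp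
qed

lemma dL_lin:
  assumes "finite P" "pa P \<phi> l u" "pa P \<psi> l u" "l < x" "x \<le> u"
  shows "dslope_left (\<lambda>y. a * \<phi> y + b * \<psi> y) x = a * dslope_left \<phi> x + b * dslope_left \<psi> x"
proof -
  obtain a' \<alpha> \<beta> \<gamma> \<delta> where h: "a' < x" "(\<forall>y\<in>{a'..x}. \<phi> y = \<alpha> + \<beta> * y)" "(\<forall>y\<in>{a'..x}. \<psi> y = \<gamma> + \<delta> * y)"
    using pa_left2[OF assms] by blast
  have h3: "\<forall>y\<in>{a'..x}. a * \<phi> y + b * \<psi> y = (a * \<alpha> + b * \<gamma>) + (a * \<beta> + b * \<delta>) * y"
    using h by (simp add: algebra_simps)
  show ?thesis using dL_aff[OF h(1) _ h(2)] dL_aff[OF h(1) _ h(3)] dL_aff[OF h(1) _ h3] by simp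
qed

lemma pa_lin:
  assumes "pa P \<phi> l u" "pa P \<psi> l u"
  shows "pa P (\<lambda>y. a * \<phi> y + b * \<psi> y) l u"
  unfolding pa_def
proof (intro allI impI)
  fix c d assume h: "l \<le> c \<and> c < d \<and> d \<le> u \<and> {c<..<d} \<inter> P = {}"
  obtain \<alpha> \<beta> where 1: "\<forall>x\<in>{c..d}. \<phi> x = \<alpha> + \<beta> * x" using assms(1) h unfolding pa_def by blast
  obtain \<gamma> \<delta> where 2: "\<forall>x\<in>{c..d}. \<psi> x = \<gamma> + \<delta> * x" using assms(2) h unfolding pa_def by blast
  have "\<forall>x\<in>{c..d}. a * \<phi> x + b * \<psi> x = (a * \<alpha> + b * \<gamma>) + (a * \<beta> + b * \<delta>) * x"
    using 1 2 by (simp add: algebra_simps)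
  then show "\<exists>\<alpha> \<beta>. \<forall>x\<in>{c..d}. a * \<phi> x + b * \<psi> x = \<alpha> + \<beta> * x" by blast
qed

lemma edge_fun_lin: "edge_fun G (\<lambda>x. a * f x + b * g x) d = (\<lambda>y. a * edge_fun G f d y + b * edge_fun G g d y)"
  unfolding edge_fun_def by auto

lemma outflux_Vtx:
  assumes "finite (edges G)"
  shows "outflux G f (Vtx v) = (\<Sum>d\<in>edges G. (if fst (ends G d) = v then dslope_right (edge_fun G f d) 0 else 0)
      + (if snd (ends G d) = v then dslope_left (edge_fun G f d) (len G d) else 0))"
  unfolding outflux_def using assms by (simp add: sum.inter_filter sum.distrib)

lemma outflux_Pt: "outflux G f (Pt d a) = dslope_right (edge_fun G f d) a + dslope_left (edge_fun G f d) a"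
  unfolding outflux_def by simp

lemma points_cases:
  assumes "x \<in> points G"
  obtains v where "x = Vtx v" "v \<in> verts G" | d a where "x = Pt d a" "d \<in> edges G" "0 < a" "a < len G d"
  using assms unfolding points_def by auto

lemma Vtx_points: "v \<in> verts G \<Longrightarrow> Vtx v \<in> points G" unfolding points_def by auto
lemma Vtx_points_iff: "Vtx v \<in> points G \<longleftrightarrow> v \<in> verts G" unfolding points_def by auto
lemma Pt_points_iff: "Pt d a \<in> points G \<longleftrightarrow> d \<in> edges G \<and> 0 < a \<and> a < len G d" unfolding points_def by auto

lemma hc_pa:
  assumes "hc G f c" "d \<in> edges G"
  obtains P where "finite P" "pa P (edge_fun G f d) 0 (len G d)"
proof -
  have "cpwl G f" using assms(1) by (simp add: hc_def)
  then have "\<forall>d\<in>edges G. \<exists>P. finite P \<and> pa P (edge_fun G f d) 0 (len G d)" by (simp add: cpwl_pa)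
  then obtain P where "finite P" "pa P (edge_fun G f d) 0 (len G d)" using assms(2) by blast
  then show ?thesis by (rule that)
qed

lemma hc_out: "hc G f c \<Longrightarrow> x \<notin> points G \<Longrightarrow> f x = 0" unfolding hc_def by blast
lemma hc_flux: "hc G f c \<Longrightarrow> x \<in> points G \<Longrightarrow> outflux G f x = c x" unfolding hc_def by blast

lemma hc_lin:
  assumes "wf_graph G" "hc G f c1" "hc G g c2"
  shows "hc G (\<lambda>x. a * f x + b * g x) (\<lambda>x. a * c1 x + b * c2 x)"
proof -
  have pa2: "\<exists>P. finite P \<and> pa P (edge_fun G f d) 0 (len G d) \<and> pa P (edge_fun G g d) 0 (len G d)"
    if dd: "d \<in> edges G" for d
  proof -
    obtain P where "finite P" "pa P (edge_fun G f d) 0 (len G d)" using hc_pa[OF assms(2) dd] by blast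
    moreover obtain Q where "finite Q" "pa Q (edge_fun G g d) 0 (len G d)" using hc_pa[OF assms(3) dd] by blast
    ultimately have "finite (P \<union> Q) \<and> pa (P \<union> Q) (edge_fun G f d) 0 (len G d) \<and> pa (P \<union> Q) (edge_fun G g d) 0 (len G d)"
      using pa_mono[of P "edge_fun G f d" 0 "len G d" "P \<union> Q"] pa_mono[of Q "edge_fun G g d" 0 "len G d" "P \<union> Q"] by simp
    then show ?thesis by (rule exI)
  qed
  have cp: "cpwl G (\<lambda>x. a * f x + b * g x)"
    unfolding cpwl_pa edge_fun_lin
  proof
    fix d assume "d \<in> edges G"
    then obtain P where P: "finite P" "pa P (edge_fun G f d) 0 (len G d)" "pa P (edge_fun G g d) 0 (len G d)"
      using pa2 by blast
    have "pa P (\<lambda>y. a * edge_fun G f d y + b * edge_fun G g d y) 0 (len G d)" by (rule pa_lin[OF P(2) P(3)])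
    with P(1) show "\<exists>P. finite P \<and> pa P (\<lambda>y. a * edge_fun G f d y + b * edge_fun G g d y) 0 (len G d)"
      by blast
  qed
  have z: "\<forall>x. x \<notin> points G \<longrightarrow> a * f x + b * g x = 0" using hc_out[OF assms(2)] hc_out[OF assms(3)] by simp
  have R: "dslope_right (edge_fun G (\<lambda>x. a * f x + b * g x) d) y = a * dslope_right (edge_fun G f d) y + b * dslope_right (edge_fun G g d) y"
    if dy: "d \<in> edges G" "0 \<le> y" "y < len G d" for d y
  proof -
    obtain P where "finite P" "pa P (edge_fun G f d) 0 (len G d)" "pa P (edge_fun G g d) 0 (len G d)"
      using pa2[OF dy(1)] by blast
    from dR_lin[OF this dy(2,3)] show ?thesis unfolding edge_fun_lin .
  qed
  have L: "dslope_left (edge_fun G (\<lambda>x. a * f x + b * g x) d) y = a * dslope_left (edge_fun G f d) y + b * dslope_left (edge_fun G g d) y"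
    if dy: "d \<in> edges G" "0 < y" "y \<le> len G d" for d y
  proof -
    obtain P where "finite P" "pa P (edge_fun G f d) 0 (len G d)" "pa P (edge_fun G g d) 0 (len G d)"
      using pa2[OF dy(1)] by blast
    from dL_lin[OF this dy(2,3)] show ?thesis unfolding edge_fun_lin .
  qed
  have o: "outflux G (\<lambda>x. a * f x + b * g x) x = a * c1 x + b * c2 x" if "x \<in> points G" for x
  proof -
    have of: "outflux G f x = c1 x" "outflux G g x = c2 x" using hc_flux[OF assms(2) that] hc_flux[OF assms(3) that] by auto
    from that show ?thesis
    proof (cases rule: points_cases)
      case (1 v)
      have "outflux G (\<lambda>x. a * f x + b * g x) (Vtx v) = a * outflux G f (Vtx v) + b * outflux G g (Vtx v)"
        unfolding outflux_Vtx[OF wf_fin(1)[OF assms(1)]] sum_distrib_left sum.distrib[symmetric]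
        using R L wfD[OF assms(1)] by (intro sum.cong refl) (auto simp: algebra_simps)
      then show ?thesis using of 1 by simp
    next
      case (2 d y)
      have "outflux G (\<lambda>x. a * f x + b * g x) (Pt d y) = a * outflux G f (Pt d y) + b * outflux G g (Pt d y)"
        using R[of d y] L[of d y] 2 by (simp add: outflux_Pt algebra_simps)
      then show ?thesis using of 2 by simp
    qed
  qed
  show ?thesis unfolding hc_def using cp z o by blast
qed

lemma hc_cong: "hc G f c \<Longrightarrow> (\<And>x. x \<in> points G \<Longrightarrow> c x = c' x) \<Longrightarrow> (\<And>x. f x = f' x) \<Longrightarrow> hc G f' c'"
proof -
  assume "hc G f c" "\<And>x. x \<in> points G \<Longrightarrow> c x = c' x" "\<And>x. f x = f' x"
  moreover then have "f = f'" by auto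
  ultimately show ?thesis unfolding hc_def by auto
qed


lemma dR_const: "l \<le> x \<Longrightarrow> x < u \<Longrightarrow> \<forall>y\<in>{l..u}. \<phi> y = k \<Longrightarrow> dslope_right \<phi> x = 0"
  using dR_aff[of l x u \<phi> k 0] by simp
lemma dL_const: "l < x \<Longrightarrow> x \<le> u \<Longrightarrow> \<forall>y\<in>{l..u}. \<phi> y = k \<Longrightarrow> dslope_left \<phi> x = 0"
  using dL_aff[of l x u \<phi> k 0] by simp

lemma pa_const: assumes "\<forall>y\<in>{l..u}. \<phi> y = k" shows "pa {} \<phi> l u"
  unfolding pa_def
proof (intro allI impI)
  fix c d assume h: "l \<le> c \<and> c < d \<and> d \<le> u \<and> {c<..<d} \<inter> {} = {}"
  have "\<forall>x\<in>{c..d}. \<phi> x = k + 0 * x" using assms h by auto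
  then show "\<exists>\<alpha> \<beta>. \<forall>x\<in>{c..d}. \<phi> x = \<alpha> + \<beta> * x" by blast
qed

lemma hc_zero: "hc G (\<lambda>_. 0) (\<lambda>_. 0)"
proof -
  have ef: "edge_fun G (\<lambda>_. 0) d = (\<lambda>_. 0)" for d unfolding edge_fun_def by auto
  have "pa {} (\<lambda>_. 0::real) 0 l" for l by (rule pa_const[where k=0]) simp
  moreover have "dslope_right (\<lambda>_. 0::real) x = 0" for x
    using dR_const[of x x "x+1" "\<lambda>_. 0" 0] by simp
  moreover have "dslope_left (\<lambda>_. 0::real) x = 0" for x
    using dL_const[of "x-1" x x "\<lambda>_. 0" 0] by simp
  ultimately have "cpwl G (\<lambda>_. 0)" "\<forall>x. outflux G (\<lambda>_. 0) x = 0"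
    unfolding cpwl_pa ef outflux_def by (auto split: pt.split)
  then show ?thesis unfolding hc_def by simp
qed

lemma hc_ind:
  assumes "wf_graph G"
  shows "hc G (ind G) (\<lambda>_. 0)"
proof -
  have ef: "\<forall>y\<in>{0..len G d}. edge_fun G (ind G) d y = 1" if "d \<in> edges G" for d
    using wfD[OF assms that] that unfolding edge_fun_def ind_def by (auto simp: Vtx_points_iff Pt_points_iff)
  have cp: "cpwl G (ind G)" unfolding cpwl_pa
  proof
    fix d assume "d \<in> edges G"
    show "\<exists>P. finite P \<and> pa P (edge_fun G (ind G) d) 0 (len G d)"
      by (rule exI[of _ "{}"]) (simp add: pa_const[OF ef[OF \<open>d \<in> edges G\<close>]])
  qed
  have o: "outflux G (ind G) x = 0" if "x \<in> points G" for x
    using that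
  proof (cases rule: points_cases)
    case (1 v)
    show ?thesis unfolding 1 outflux_Vtx[OF wf_fin(1)[OF assms]]
    proof (intro sum.neutral ballI)
      fix d assume d: "d \<in> edges G"
      have "dslope_right (edge_fun G (ind G) d) 0 = 0"
        using dR_const[OF _ _ ef[OF d]] wfD(1)[OF assms d] by simp
      moreover have "dslope_left (edge_fun G (ind G) d) (len G d) = 0"
        using dL_const[OF _ _ ef[OF d]] wfD(1)[OF assms d] by simp
      ultimately show "(if fst (ends G d) = v then dslope_right (edge_fun G (ind G) d) 0 else 0) +
         (if snd (ends G d) = v then dslope_left (edge_fun G (ind G) d) (len G d) else 0) = 0" by simp
    qed
  next
    case (2 d a)
    have "dslope_right (edge_fun G (ind G) d) a = 0"
      using dR_const[OF _ _ ef[OF 2(2)]] 2 by simp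
    moreover have "dslope_left (edge_fun G (ind G) d) a = 0"
      using dL_const[OF _ _ ef[OF 2(2)]] 2 by simp
    ultimately show ?thesis unfolding 2 outflux_Pt by simp
  qed
  have "\<forall>x. x \<notin> points G \<longrightarrow> ind G x = 0" unfolding ind_def by simp
  then show ?thesis unfolding hc_def using cp o by blast
qed



lemma vsum:
  fixes h :: "'v \<Rightarrow> real" and A B :: "'e \<Rightarrow> real"
  assumes "finite V" "finite E" "\<forall>d\<in>E. fst (en d) \<in> V \<and> snd (en d) \<in> V"
  shows "(\<Sum>v\<in>V. h v * (\<Sum>d\<in>E. (if fst (en d) = v then A d else 0) + (if snd (en d) = v then B d else 0)))
       = (\<Sum>d\<in>E. h (fst (en d)) * A d + h (snd (en d)) * B d)"
proof -
  have "(\<Sum>v\<in>V. h v * (\<Sum>d\<in>E. (if fst (en d) = v then A d else 0) + (if snd (en d) = v then B d else 0)))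
     = (\<Sum>v\<in>V. \<Sum>d\<in>E. (if fst (en d) = v then h v * A d else 0) + (if snd (en d) = v then h v * B d else 0))"
  proof (rule sum.cong[OF refl])
    fix v assume "v \<in> V"
    have t: "h v * ((if fst (en d) = v then A d else 0) + (if snd (en d) = v then B d else 0)) =
      (if fst (en d) = v then h v * A d else 0) + (if snd (en d) = v then h v * B d else 0)" for d
      by (simp add: distrib_left)
    show "h v * (\<Sum>d\<in>E. (if fst (en d) = v then A d else 0) + (if snd (en d) = v then B d else 0)) =
      (\<Sum>d\<in>E. (if fst (en d) = v then h v * A d else 0) + (if snd (en d) = v then h v * B d else 0))"
      unfolding sum_distrib_left t ..
  qed
  also have "\<dots> = (\<Sum>d\<in>E. \<Sum>v\<in>V. (if fst (en d) = v then h v * A d else 0) + (if snd (en d) = v then h v * B d else 0))"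
    by (rule sum.swap)
  also have "\<dots> = (\<Sum>d\<in>E. h (fst (en d)) * A d + h (snd (en d)) * B d)"
  proof (rule sum.cong[OF refl])
    fix d assume "d \<in> E"
    then show "(\<Sum>v\<in>V. (if fst (en d) = v then h v * A d else 0) + (if snd (en d) = v then h v * B d else 0))
       = h (fst (en d)) * A d + h (snd (en d)) * B d"
      using assms(1,3) by (simp add: sum.distrib sum.delta)
  qed
  finally show ?thesis .
qed

definition Tsum :: "('v,'e) mgraph \<Rightarrow> ('e \<Rightarrow> real set) \<Rightarrow> (('v,'e) pt \<Rightarrow> real) \<Rightarrow> (('v,'e) pt \<Rightarrow> real) \<Rightarrow> real" where
  "Tsum G W f g = (\<Sum>v\<in>verts G. g (Vtx v) * outflux G f (Vtx v)) +
      (\<Sum>d\<in>edges G. \<Sum>a\<in>W d \<inter> {0<..<len G d}. g (Pt d a) * outflux G f (Pt d a))"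

lemma Tsum_GE:
  assumes "wf_graph G"
  shows "Tsum G W f g = (\<Sum>d\<in>edges G. GE (W d) (edge_fun G f d) (edge_fun G g d) 0 (len G d))"
proof -
  have fE: "finite (edges G)" and fV: "finite (verts G)" using wf_fin assms by auto
  have 1: "(\<Sum>v\<in>verts G. g (Vtx v) * outflux G f (Vtx v)) =
     (\<Sum>d\<in>edges G. g (Vtx (fst (ends G d))) * dslope_right (edge_fun G f d) 0
        + g (Vtx (snd (ends G d))) * dslope_left (edge_fun G f d) (len G d))"
  proof -
    have "\<forall>d\<in>edges G. fst (ends G d) \<in> verts G \<and> snd (ends G d) \<in> verts G" using wfD[OF assms] by blast
    from vsum[OF fV fE this, of "\<lambda>v. g (Vtx v)"] show ?thesis unfolding outflux_Vtx[OF fE] .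
  qed
  show ?thesis unfolding Tsum_def 1 sum.distrib[symmetric]
  proof (rule sum.cong[OF refl])
    fix d assume d: "d \<in> edges G"
    have L: "len G d > 0" using wfD[OF assms d] by simp
    have e0: "edge_fun G g d 0 = g (Vtx (fst (ends G d)))" unfolding edge_fun_def by simp
    have eL: "edge_fun G g d (len G d) = g (Vtx (snd (ends G d)))" unfolding edge_fun_def using L by simp
    have "(\<Sum>a\<in>W d \<inter> {0<..<len G d}. g (Pt d a) * outflux G f (Pt d a)) =
          (\<Sum>a\<in>W d \<inter> {0<..<len G d}. edge_fun G g d a * (dslope_right (edge_fun G f d) a + dslope_left (edge_fun G f d) a))"
      by (rule sum.cong[OF refl]) (simp add: edge_fun_def outflux_Pt)
    then show "g (Vtx (fst (ends G d))) * dslope_right (edge_fun G f d) 0 +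
          g (Vtx (snd (ends G d))) * dslope_left (edge_fun G f d) (len G d) +
          (\<Sum>a\<in>W d \<inter> {0<..<len G d}. g (Pt d a) * outflux G f (Pt d a)) =
          GE (W d) (edge_fun G f d) (edge_fun G g d) 0 (len G d)"
      unfolding GE_def e0 eL by simp
  qed
qed

lemma sum_N:
  assumes "finite V" "finite E" "\<forall>d\<in>E. finite (U d)"
  shows "(\<Sum>x\<in>Vtx ` V \<union> (\<Union>d\<in>E. Pt d ` U d). k x) = (\<Sum>v\<in>V. k (Vtx v)) + (\<Sum>d\<in>E. \<Sum>a\<in>U d. k (Pt d a))"
proof -
  have disj: "Vtx ` V \<inter> (\<Union>d\<in>E. Pt d ` U d) = {}" by auto
  have f2: "finite (\<Union>d\<in>E. Pt d ` U d)" using assms by auto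
  have "(\<Sum>x\<in>Vtx ` V \<union> (\<Union>d\<in>E. Pt d ` U d). k x) = (\<Sum>x\<in>Vtx ` V. k x) + (\<Sum>x\<in>(\<Union>d\<in>E. Pt d ` U d). k x)"
    using assms(1) f2 disj by (intro sum.union_disjoint) auto
  also have "(\<Sum>x\<in>Vtx ` V. k x) = (\<Sum>v\<in>V. k (Vtx v))" by (simp add: sum.reindex inj_on_def)
  also have "(\<Sum>x\<in>(\<Union>d\<in>E. Pt d ` U d). k x) = (\<Sum>d\<in>E. \<Sum>x\<in>Pt d ` U d. k x)"
    using assms by (intro sum.UNION_disjoint) auto
  also have "\<dots> = (\<Sum>d\<in>E. \<Sum>a\<in>U d. k (Pt d a))"
    by (intro sum.cong refl) (simp add: sum.reindex inj_on_def)
  finally show ?thesis .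
qed

lemma Tsum_S:
  assumes "wf_graph G" "finite S" "S \<subseteq> points G"
    and "\<forall>d\<in>edges G. finite (W d) \<and> {a. Pt d a \<in> S} \<subseteq> W d"
    and "\<forall>x\<in>points G - S. outflux G f x = 0"
  shows "Tsum G W f g = (\<Sum>x\<in>S. g x * outflux G f x)"
proof -
  define N where "N = Vtx ` verts G \<union> (\<Union>d\<in>edges G. Pt d ` (W d \<inter> {0<..<len G d}))"
  have fin: "finite (verts G)" "finite (edges G)" using wf_fin assms(1) by auto
  have "Tsum G W f g = (\<Sum>x\<in>N. g x * outflux G f x)"
  proof -
    have "\<forall>d\<in>edges G. finite (W d \<inter> {0<..<len G d})" using assms(4) by auto
    from sum_N[OF fin this, of "\<lambda>x. g x * outflux G f x"] show ?thesis unfolding Tsum_def N_def by simp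
  qed
  also have "\<dots> = (\<Sum>x\<in>S. g x * outflux G f x)"
  proof (rule sum.mono_neutral_right)
    show "finite N" unfolding N_def using fin assms(4) by auto
    show "S \<subseteq> N"
    proof
      fix x assume "x \<in> S"
      then have "x \<in> points G" using assms(3) by auto
      then show "x \<in> N"
      proof (cases rule: points_cases)
        case (1 v) then show ?thesis unfolding N_def by auto
      next
        case (2 d a)
        then have "a \<in> W d \<inter> {0<..<len G d}" using assms(4) \<open>x \<in> S\<close> by auto
        then have "Pt d a \<in> (\<Union>d\<in>edges G. Pt d ` (W d \<inter> {0<..<len G d}))" using 2(2) by blast
        then show ?thesis unfolding N_def 2(1) by blast
      qed
    qed
    have "N \<subseteq> points G" unfolding N_def points_def by auto
    then show "\<forall>x\<in>N - S. g x * outflux G f x = 0" using assms(5) by auto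
  qed
  finally show ?thesis .
qed

lemma hc_choice:
  assumes "hc G f c"
  shows "\<exists>P. \<forall>d\<in>edges G. finite (P d) \<and> pa (P d) (edge_fun G f d) 0 (len G d)"
proof -
  have "cpwl G f" using assms by (simp add: hc_def)
  then have "\<forall>d\<in>edges G. \<exists>P. finite P \<and> pa P (edge_fun G f d) 0 (len G d)" by (simp add: cpwl_pa)
  then show ?thesis by (rule bchoice)
qed

lemma finite_Pt_pre: "finite S \<Longrightarrow> finite {a. Pt d a \<in> S}"
proof -
  assume "finite S"
  moreover have "inj (Pt d)" by (simp add: inj_def)
  ultimately have "finite (Pt d -` S)" by (rule finite_vimageI)
  then show ?thesis by (simp add: vimage_def)
qed

lemma green_W:
  assumes "wf_graph G" "hc G f c1" "hc G g c2" "finite S"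
  obtains W where "\<forall>d\<in>edges G. finite (W d) \<and> {a. Pt d a \<in> S} \<subseteq> W d"
    "\<forall>d\<in>edges G. pa (W d) (edge_fun G f d) 0 (len G d) \<and> pa (W d) (edge_fun G g d) 0 (len G d)"
proof -
  obtain P where P: "\<forall>d\<in>edges G. finite (P d) \<and> pa (P d) (edge_fun G f d) 0 (len G d)" using hc_choice[OF assms(2)] by blast
  obtain Q where Q: "\<forall>d\<in>edges G. finite (Q d) \<and> pa (Q d) (edge_fun G g d) 0 (len G d)" using hc_choice[OF assms(3)] by blast
  define W where "W d = P d \<union> Q d \<union> {a. Pt d a \<in> S}" for d
  have 1: "\<forall>d\<in>edges G. finite (W d) \<and> {a. Pt d a \<in> S} \<subseteq> W d"
    unfolding W_def using P Q finite_Pt_pre[OF assms(4)] by auto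
  have 2: "\<forall>d\<in>edges G. pa (W d) (edge_fun G f d) 0 (len G d) \<and> pa (W d) (edge_fun G g d) 0 (len G d)"
  proof
    fix d assume d: "d \<in> edges G"
    have "P d \<subseteq> W d" "Q d \<subseteq> W d" unfolding W_def by auto
    then show "pa (W d) (edge_fun G f d) 0 (len G d) \<and> pa (W d) (edge_fun G g d) 0 (len G d)"
      using pa_mono P Q d by blast
  qed
  show ?thesis using that 1 2 by blast
qed

lemma green:
  assumes "wf_graph G" "hc G f c1" "hc G g c2" "finite S" "S \<subseteq> points G"
    and "\<forall>x\<in>points G - S. c1 x = 0" "\<forall>x\<in>points G - S. c2 x = 0"
  shows "(\<Sum>x\<in>S. g x * c1 x) = (\<Sum>x\<in>S. f x * c2 x)"
proof -
  obtain W where W1: "\<forall>d\<in>edges G. finite (W d) \<and> {a. Pt d a \<in> S} \<subseteq> W d"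
    and W2: "\<forall>d\<in>edges G. pa (W d) (edge_fun G f d) 0 (len G d) \<and> pa (W d) (edge_fun G g d) 0 (len G d)"
    using green_W[OF assms(1-4)] by blast
  have o1: "\<forall>x\<in>points G - S. outflux G f x = 0" using assms(6) hc_flux[OF assms(2)] by auto
  have o2: "\<forall>x\<in>points G - S. outflux G g x = 0" using assms(7) hc_flux[OF assms(3)] by auto
  have "(\<Sum>x\<in>S. g x * c1 x) = (\<Sum>x\<in>S. g x * outflux G f x)"
    using hc_flux[OF assms(2)] assms(5) by (intro sum.cong) auto
  also have "\<dots> = Tsum G W f g" using Tsum_S[OF assms(1,4,5) W1 o1] by simp
  also have "\<dots> = Tsum G W g f"
    unfolding Tsum_GE[OF assms(1)]
  proof (rule sum.cong[OF refl])
    fix d assume d: "d \<in> edges G"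
    show "GE (W d) (edge_fun G f d) (edge_fun G g d) 0 (len G d) = GE (W d) (edge_fun G g d) (edge_fun G f d) 0 (len G d)"
      using GE_main[of "W d" 0 "len G d" "edge_fun G f d" "edge_fun G g d"] W1 W2 d wfD[OF assms(1) d] by blast
  qed
  also have "\<dots> = (\<Sum>x\<in>S. f x * outflux G g x)" using Tsum_S[OF assms(1,4,5) W1 o2] by simp
  also have "\<dots> = (\<Sum>x\<in>S. f x * c2 x)"
    using hc_flux[OF assms(3)] assms(5) by (intro sum.cong) auto
  finally show ?thesis .
qed

lemma energy:
  assumes "wf_graph G" "hc G f c" "finite S" "S \<subseteq> points G"
    and "\<forall>x\<in>points G - S. c x = 0"
  shows "(\<Sum>x\<in>S. f x * c x) \<le> 0 \<and> ((\<Sum>x\<in>S. f x * c x) = 0 \<longrightarrow>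
     (\<forall>d\<in>edges G. \<forall>y\<in>{0..len G d}. edge_fun G f d y = edge_fun G f d 0))"
proof -
  obtain W where W1: "\<forall>d\<in>edges G. finite (W d) \<and> {a. Pt d a \<in> S} \<subseteq> W d"
    and W2: "\<forall>d\<in>edges G. pa (W d) (edge_fun G f d) 0 (len G d) \<and> pa (W d) (edge_fun G f d) 0 (len G d)"
    using green_W[OF assms(1,2,2,3)] by blast
  have o1: "\<forall>x\<in>points G - S. outflux G f x = 0" using assms(5) hc_flux[OF assms(2)] by auto
  have GEd: "GE (W d) (edge_fun G f d) (edge_fun G f d) 0 (len G d) \<le> 0 \<and>
     (GE (W d) (edge_fun G f d) (edge_fun G f d) 0 (len G d) = 0 \<longrightarrow> (\<forall>y\<in>{0..len G d}. edge_fun G f d y = edge_fun G f d 0))"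
    if d: "d \<in> edges G" for d
    using GE_main[of "W d" 0 "len G d" "edge_fun G f d" "edge_fun G f d"] W1 W2 d wfD[OF assms(1) d] by blast
  have eq: "(\<Sum>x\<in>S. f x * c x) = (\<Sum>d\<in>edges G. GE (W d) (edge_fun G f d) (edge_fun G f d) 0 (len G d))"
  proof -
    have "(\<Sum>x\<in>S. f x * c x) = (\<Sum>x\<in>S. f x * outflux G f x)"
      using hc_flux[OF assms(2)] assms(4) by (intro sum.cong) auto
    also have "\<dots> = Tsum G W f f" using Tsum_S[OF assms(1,3,4) W1 o1] by simp
    finally show ?thesis unfolding Tsum_GE[OF assms(1)] .
  qed
  have le: "(\<Sum>x\<in>S. f x * c x) \<le> 0" unfolding eq using GEd by (intro sum_nonpos) blast
  moreover have "(\<Sum>x\<in>S. f x * c x) = 0 \<longrightarrow>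
     (\<forall>d\<in>edges G. \<forall>y\<in>{0..len G d}. edge_fun G f d y = edge_fun G f d 0)"
  proof (intro impI ballI)
    fix d y assume z: "(\<Sum>x\<in>S. f x * c x) = 0" and d: "d \<in> edges G" and y: "y \<in> {0..len G d}"
    have fE: "finite (edges G)" using wf_fin assms(1) by auto
    have "(\<Sum>d\<in>edges G. - GE (W d) (edge_fun G f d) (edge_fun G f d) 0 (len G d)) = 0"
      using z unfolding eq by (simp add: sum_negf)
    then have "\<forall>d\<in>edges G. - GE (W d) (edge_fun G f d) (edge_fun G f d) 0 (len G d) = 0"
      using sum_nonneg_eq_0_iff[OF fE, of "\<lambda>d. - GE (W d) (edge_fun G f d) (edge_fun G f d) 0 (len G d)"]
        GEd by auto
    then have "\<forall>d\<in>edges G. GE (W d) (edge_fun G f d) (edge_fun G f d) 0 (len G d) = 0" by simp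
    then show "edge_fun G f d y = edge_fun G f d 0" using GEd d y by blast
  qed
  ultimately show ?thesis by blast
qed



lemma vadj_sym: "vadj G u v \<Longrightarrow> vadj G v u" unfolding vadj_def by blast

lemma rtranclp_vadj_sym: "(vadj G)\<^sup>*\<^sup>* u v \<Longrightarrow> (vadj G)\<^sup>*\<^sup>* v u"
proof (induction rule: rtranclp_induct)
  case base then show ?case by simp
next
  case (step y z)
  show ?case by (rule converse_rtranclp_into_rtranclp[OF vadj_sym[OF step(2)] step(3)])
qed

lemma conn_path: "connected_graph G \<Longrightarrow> u \<in> verts G \<Longrightarrow> v \<in> verts G \<Longrightarrow> (vadj G)\<^sup>*\<^sup>* u v"
  unfolding connected_graph_def by simp

lemma edges_const:
  assumes "wf_graph G" "connected_graph G"
    and "\<forall>d\<in>edges G. \<forall>y\<in>{0..len G d}. edge_fun G f d y = edge_fun G f d 0"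
  shows "\<exists>k. \<forall>x\<in>points G. f x = k"
proof -
  have e: "f (Vtx (snd (ends G d))) = f (Vtx (fst (ends G d)))" if d: "d \<in> edges G" for d
  proof -
    have L: "len G d > 0" using wfD[OF assms(1) d] by simp
    then have "len G d \<in> {0..len G d}" by simp
    then have "edge_fun G f d (len G d) = edge_fun G f d 0" using assms(3) d by blast
    then show ?thesis unfolding edge_fun_def using L by simp
  qed
  have adj: "f (Vtx u) = f (Vtx w)" if uw: "vadj G u w" for u w
  proof -
    obtain d where d: "d \<in> edges G" "ends G d = (u, w) \<or> ends G d = (w, u)" using uw unfolding vadj_def by blast
    from d(2) show ?thesis
    proof
      assume "ends G d = (u, w)" then show ?thesis using e[OF d(1)] by simp
    next
      assume "ends G d = (w, u)" then show ?thesis using e[OF d(1)] by simp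
    qed
  qed
  have path: "f (Vtx u) = f (Vtx w)" if "(vadj G)\<^sup>*\<^sup>* u w" for u w
    using that
  proof (induction rule: rtranclp_induct)
    case base then show ?case by simp
  next
    case (step y z) then show ?case using adj[OF step(2)] by simp
  qed
  obtain v0 where v0: "v0 \<in> verts G" using assms(1) unfolding wf_graph_def by blast
  have "\<forall>x\<in>points G. f x = f (Vtx v0)"
  proof
    fix x assume "x \<in> points G"
    then show "f x = f (Vtx v0)"
    proof (cases rule: points_cases)
      case (1 v)
      then have "(vadj G)\<^sup>*\<^sup>* v0 v" using conn_path[OF assms(2) v0] by simp
      from path[OF this] show ?thesis using 1 by simp
    next
      case (2 d a)
      then have "a \<in> {0..len G d}" by simp
      then have "edge_fun G f d a = edge_fun G f d 0" using assms(3) 2 by blast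
      then have "f (Pt d a) = f (Vtx (fst (ends G d)))" unfolding edge_fun_def using 2 by simp
      moreover have "f (Vtx v0) = f (Vtx (fst (ends G d)))"
        using path[OF conn_path[OF assms(2) v0 wfD(2)[OF assms(1) 2(2)]]] .
      ultimately show ?thesis using 2(1) by simp
    qed
  qed
  then show ?thesis by blast
qed

lemma harmonic_const:
  assumes "wf_graph G" "connected_graph G" "hc G h c" "\<forall>x\<in>points G. c x = 0"
  shows "\<exists>k. \<forall>x\<in>points G. h x = k"
proof -
  have c0: "\<forall>x\<in>points G - {}. c x = 0" using assms(4) by simp
  have "(\<Sum>x\<in>{}. h x * c x) \<le> 0 \<and> ((\<Sum>x\<in>{}. h x * c x) = 0 \<longrightarrow>
     (\<forall>d\<in>edges G. \<forall>y\<in>{0..len G d}. edge_fun G h d y = edge_fun G h d 0))"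
    using energy[OF assms(1,3) finite.emptyI empty_subsetI c0] .
  moreover have "(\<Sum>x\<in>{}. h x * c x) = 0" by simp
  ultimately have "\<forall>d\<in>edges G. \<forall>y\<in>{0..len G d}. edge_fun G h d y = edge_fun G h d 0" by blast
  then show ?thesis by (rule edges_const[OF assms(1,2)])
qed

lemma hc_unique:
  assumes "wf_graph G" "connected_graph G" "hc G f c" "hc G g c" "z \<in> points G" "f z = g z"
  shows "f = g"
proof -
  have h: "hc G (\<lambda>x. 1 * f x + (-1) * g x) (\<lambda>x. 1 * c x + (-1) * c x)" by (rule hc_lin[OF assms(1,3,4)])
  obtain k where k: "\<forall>x\<in>points G. 1 * f x + (-1) * g x = k" using harmonic_const[OF assms(1,2) h] by auto
  have "k = 0" using k assms(5,6) by force
  show ?thesis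
  proof
    fix x show "f x = g x"
    proof (cases "x \<in> points G")
      case True then show ?thesis using k \<open>k = 0\<close> by force
    next
      case False then show ?thesis using hc_out[OF assms(3)] hc_out[OF assms(4)] by simp
    qed
  qed
qed

lemma chg_sum:
  assumes "y \<noteq> z"
  shows "(\<Sum>x\<in>{y,z}. f x * chg y z x) = f z - f y"
  using assms by (simp add: chg_def)

lemma chg_zero: "x \<noteq> y \<Longrightarrow> x \<noteq> z \<Longrightarrow> chg y z x = 0" by (simp add: chg_def)

lemma resist_pos:
  assumes "wf_graph G" "connected_graph G" "hc G f (chg y z)" "y \<in> points G" "z \<in> points G" "y \<noteq> z"
  shows "f z < f y"
proof -
  have E: "(\<Sum>x\<in>{y,z}. f x * chg y z x) \<le> 0 \<and> ((\<Sum>x\<in>{y,z}. f x * chg y z x) = 0 \<longrightarrow>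
     (\<forall>d\<in>edges G. \<forall>t\<in>{0..len G d}. edge_fun G f d t = edge_fun G f d 0))"
    by (rule energy[OF assms(1,3)]) (use assms(4,5) chg_zero in auto)
  have le: "f z \<le> f y" using conjunct1[OF E] chg_sum[OF assms(6)] by simp
  show ?thesis
  proof (rule ccontr)
    assume "\<not> f z < f y"
    then have "f z = f y" using le by simp
    then have "(\<Sum>x\<in>{y,z}. f x * chg y z x) = 0" using chg_sum[OF assms(6)] by simp
    then have "\<forall>d\<in>edges G. \<forall>t\<in>{0..len G d}. edge_fun G f d t = edge_fun G f d 0"
      using E by blast
    then obtain k where k: "\<forall>x\<in>points G. f x = k"
      using edges_const[OF assms(1,2)] by blast
    have h: "hc G (\<lambda>x. k * ind G x + 0 * f x) (\<lambda>x. k * 0 + 0 * chg y z x)"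
      by (rule hc_lin[OF assms(1) hc_ind[OF assms(1)] assms(3)])
    have "(\<lambda>x. k * ind G x + 0 * f x) = f"
    proof
      fix x show "k * ind G x + 0 * f x = f x"
        using k hc_out[OF assms(3)] by (cases "x \<in> points G") (auto simp: ind_def)
    qed
    then have "outflux G f y = 0" using hc_flux[OF h assms(4)] by simp
    moreover have "outflux G f y = -1" using hc_flux[OF assms(3,4)] assms(6) by (simp add: chg_def)
    ultimately show False by simp
  qed
qed

lemma is_voltage_hc: "is_voltage G y z f \<longleftrightarrow> hc G f (chg y z) \<and> f z = 0"
  unfolding is_voltage_def hc_def chg_def by auto

lemma jv_eq:
  assumes "wf_graph G" "connected_graph G" "is_voltage G y z f" "z \<in> points G"
  shows "jv G z x y = f x"
proof -
  have "(THE f. is_voltage G y z f) = f"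
  proof (rule the_equality)
    show "is_voltage G y z f" by fact
    fix g assume "is_voltage G y z g"
    then have g: "hc G g (chg y z)" "g z = 0" unfolding is_voltage_hc by auto
    have f: "hc G f (chg y z)" "f z = 0" using assms(3) unfolding is_voltage_hc by auto
    show "g = f" using hc_unique[OF assms(1,2) g(1) f(1) assms(4)] g(2) f(2) by simp
  qed
  then show ?thesis unfolding jv_def by simp
qed

lemma volt_from_hc:
  assumes "wf_graph G" "hc G f (chg y z)" "z \<in> points G"
  shows "is_voltage G y z (\<lambda>x. 1 * f x + (- f z) * ind G x)"
proof -
  have h: "hc G (\<lambda>x. 1 * f x + (- f z) * ind G x) (\<lambda>x. 1 * chg y z x + (- f z) * 0)"
    by (rule hc_lin[OF assms(1,2) hc_ind[OF assms(1)]])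
  then have "hc G (\<lambda>x. 1 * f x + (- f z) * ind G x) (chg y z)" by (rule hc_cong) simp_all
  moreover have "1 * f z + (- f z) * ind G z = 0" using assms(3) by (simp add: ind_def)
  ultimately show ?thesis unfolding is_voltage_hc by blast
qed



section \<open>Deleting an edge\<close>

lemma del_simps[simp]: "verts (del_edge G e) = verts G" "edges (del_edge G e) = edges G - {e}"
  "ends (del_edge G e) = ends G" "len (del_edge G e) = len G"
  unfolding del_edge_def by simp_all

lemma wf_del: "wf_graph G \<Longrightarrow> wf_graph (del_edge G e)"
  unfolding wf_graph_def by auto

lemma points_del: "points (del_edge G e) = points G - {Pt e a | a. True}"
  unfolding points_def by auto

lemma points_del_sub: "x \<in> points (del_edge G e) \<Longrightarrow> x \<in> points G"
  unfolding points_del by auto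

lemma edge_fun_del[simp]: "edge_fun (del_edge G e) f d = edge_fun G f d"
  unfolding edge_fun_def del_simps ..

lemma outflux_del_Pt: "outflux (del_edge G e) f (Pt d a) = outflux G f (Pt d a)"
  unfolding outflux_Pt by simp

lemma outflux_del_Vtx:
  assumes "finite (edges G)" "e \<in> edges G"
  shows "outflux G f (Vtx v) = outflux (del_edge G e) f (Vtx v)
     + (if fst (ends G e) = v then dslope_right (edge_fun G f e) 0 else 0)
     + (if snd (ends G e) = v then dslope_left (edge_fun G f e) (len G e) else 0)"
proof -
  have f2: "finite (edges (del_edge G e))" using assms(1) by simp
  show ?thesis unfolding outflux_Vtx[OF assms(1)] outflux_Vtx[OF f2] del_simps edge_fun_del
    by (subst sum.remove[OF assms(1,2)]) (simp add: algebra_simps)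
qed

lemma hc_self: "cpwl G f \<Longrightarrow> (\<forall>x. x \<notin> points G \<longrightarrow> f x = 0) \<Longrightarrow> hc G f (outflux G f)"
  unfolding hc_def by simp

lemma pa_aff: assumes "\<forall>y\<in>{l..u}. \<phi> y = \<alpha> + \<beta> * y" shows "pa {} \<phi> l u"
  unfolding pa_def
proof (intro allI impI)
  fix c d assume h: "l \<le> c \<and> c < d \<and> d \<le> u \<and> {c<..<d} \<inter> {} = {}"
  have "\<forall>x\<in>{c..d}. \<phi> x = \<alpha> + \<beta> * x" using assms h by auto
  then show "\<exists>\<alpha> \<beta>. \<forall>x\<in>{c..d}. \<phi> x = \<alpha> + \<beta> * x" by blast
qed

definition ext :: "('v,'e) mgraph \<Rightarrow> 'e \<Rightarrow> (('v,'e) pt \<Rightarrow> real) \<Rightarrow> ('v,'e) pt \<Rightarrow> real" where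
  "ext G e h x = (case x of Pt d a \<Rightarrow> if d = e then
      (if 0 < a \<and> a < len G e then h (Vtx (fst (ends G e))) +
          (h (Vtx (snd (ends G e))) - h (Vtx (fst (ends G e)))) * a / len G e else 0)
      else h x | Vtx v \<Rightarrow> h x)"

lemma ext_other: "(\<And>a. x \<noteq> Pt e a) \<Longrightarrow> ext G e h x = h x"
  unfolding ext_def by (cases x) auto

lemma ext_points: "x \<in> points (del_edge G e) \<Longrightarrow> ext G e h x = h x"
  by (rule ext_other) (auto simp: points_del)

lemma edge_fun_ext_other: "d \<noteq> e \<Longrightarrow> edge_fun G (ext G e h) d = edge_fun G h d"
  unfolding edge_fun_def by (auto simp: ext_other)

lemma edge_fun_ext_e:
  assumes "len G e > 0"
  shows "\<forall>y\<in>{0..len G e}. edge_fun G (ext G e h) e y = h (Vtx (fst (ends G e))) +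
     ((h (Vtx (snd (ends G e))) - h (Vtx (fst (ends G e)))) / len G e) * y"
proof
  fix y assume y: "y \<in> {0..len G e}"
  consider "y = 0" | "y = len G e" | "0 < y \<and> y < len G e" using y by force
  then show "edge_fun G (ext G e h) e y = h (Vtx (fst (ends G e))) +
     ((h (Vtx (snd (ends G e))) - h (Vtx (fst (ends G e)))) / len G e) * y"
  proof cases
    case 1 then show ?thesis unfolding edge_fun_def by (simp add: ext_other)
  next
    case 2 then show ?thesis unfolding edge_fun_def using assms by (simp add: ext_other)
  next
    case 3 then show ?thesis unfolding edge_fun_def ext_def by simp
  qed
qed

lemma hc_ext:
  assumes "wf_graph G" "e \<in> edges G" "hc (del_edge G e) h c"
  defines "\<sigma> \<equiv> (h (Vtx (snd (ends G e))) - h (Vtx (fst (ends G e)))) / len G e"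
  shows "hc G (ext G e h) (\<lambda>x. if x \<in> points (del_edge G e) then c x + \<sigma> *
     ((if x = Vtx (fst (ends G e)) then 1 else 0) - (if x = Vtx (snd (ends G e)) then 1 else 0)) else 0)"
proof -
  let ?G' = "del_edge G e"
  have L: "len G e > 0" using wfD[OF assms(1,2)] by simp
  have aff: "\<forall>y\<in>{0..len G e}. edge_fun G (ext G e h) e y = h (Vtx (fst (ends G e))) + \<sigma> * y"
    using edge_fun_ext_e[OF L] unfolding \<sigma>_def by simp
  have cp: "cpwl G (ext G e h)" unfolding cpwl_pa
  proof
    fix d assume d: "d \<in> edges G"
    show "\<exists>P. finite P \<and> pa P (edge_fun G (ext G e h) d) 0 (len G d)"
    proof (cases "d = e")
      case True
      have "pa {} (edge_fun G (ext G e h) d) 0 (len G d)" using pa_aff[OF aff] True by simp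
      then show ?thesis by blast
    next
      case False
      then have "d \<in> edges ?G'" using d by simp
      then obtain P where "finite P" "pa P (edge_fun ?G' h d) 0 (len ?G' d)" using hc_pa[OF assms(3)] by blast
      then show ?thesis unfolding edge_fun_ext_other[OF False] del_simps edge_fun_del by blast
    qed
  qed
  have zo: "\<forall>x. x \<notin> points G \<longrightarrow> ext G e h x = 0"
  proof (intro allI impI)
    fix x assume x: "x \<notin> points G"
    have xG': "x \<notin> points ?G'"
    proof
      assume "x \<in> points ?G'"
      then have "x \<in> points G" by (rule points_del_sub)
      with x show False by simp
    qed
    show "ext G e h x = 0"
    proof (cases x)
      case (Vtx v)
      then have "ext G e h x = h x" unfolding ext_def by simp
      then show ?thesis using hc_out[OF assms(3) xG'] by linarith
    next
      case (Pt d a)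
      show ?thesis
      proof (cases "d = e")
        case True
        then have "\<not> (0 < a \<and> a < len G e)" using x assms(2) Pt True by (simp add: Pt_points_iff)
        then show ?thesis unfolding Pt ext_def using True by auto
      next
        case False
        then have "ext G e h x = h x" unfolding ext_def Pt by simp
        then show ?thesis using hc_out[OF assms(3) xG'] by linarith
      qed
    qed
  qed
  have dRe: "dslope_right (edge_fun G (ext G e h) e) y = \<sigma>" if "0 \<le> y" "y < len G e" for y
    using dR_aff[OF that aff] .
  have dLe: "dslope_left (edge_fun G (ext G e h) e) y = - \<sigma>" if "0 < y" "y \<le> len G e" for y
    using dL_aff[OF that aff] .
  have o: "outflux G (ext G e h) x = (if x \<in> points ?G' then c x + \<sigma> *
     ((if x = Vtx (fst (ends G e)) then 1 else 0) - (if x = Vtx (snd (ends G e)) then 1 else 0)) else 0)"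
    if x: "x \<in> points G" for x
    using x
  proof (cases rule: points_cases)
    case (1 v)
    have xG': "x \<in> points ?G'" using 1 by (simp add: Vtx_points_iff)
    have fE: "finite (edges G)" using wf_fin(1)[OF assms(1)] .
    have fE': "finite (edges ?G')" using fE by simp
    have "outflux ?G' (ext G e h) (Vtx v) = outflux ?G' h (Vtx v)"
      unfolding outflux_Vtx[OF fE'] by (intro sum.cong refl) (simp add: edge_fun_ext_other)
    also have "\<dots> = c x" using hc_flux[OF assms(3) xG'] 1 by simp
    finally have o': "outflux ?G' (ext G e h) (Vtx v) = c x" .
    show ?thesis unfolding 1 outflux_del_Vtx[OF fE assms(2)] o'
      using xG' 1 dRe[of 0] dLe[of "len G e"] L by auto
  next
    case (2 d a)
    show ?thesis
    proof (cases "d = e")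
      case True
      have "Pt d a \<notin> points ?G'" using True by (simp add: points_del)
      then show ?thesis unfolding 2 outflux_Pt using True dRe[of a] dLe[of a] 2 by simp
    next
      case False
      have xG': "x \<in> points ?G'" using 2 False by (simp add: Pt_points_iff)
      have "outflux G (ext G e h) (Pt d a) = outflux ?G' h (Pt d a)"
        unfolding outflux_Pt edge_fun_ext_other[OF False] by simp
      also have "\<dots> = c x" using hc_flux[OF assms(3) xG'] 2 by simp
      finally show ?thesis using xG' 2 by simp
    qed
  qed
  show ?thesis unfolding hc_def using cp zo o by blast
qed



section \<open>Contraction\<close>

lemma con_simps[simp]: "verts (contract G e) = cmap G e ` verts G" "edges (contract G e) = edges G - {e}"
  "ends (contract G e) d = map_prod (cmap G e) (cmap G e) (ends G d)" "len (contract G e) = len G"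
  unfolding contract_def by simp_all

lemma cmap_p[simp]: "cmap G e (fst (ends G e)) = fst (ends G e)" unfolding cmap_def by simp
lemma cmap_q[simp]: "cmap G e (snd (ends G e)) = fst (ends G e)" unfolding cmap_def by simp
lemma cmap_o: "v \<noteq> snd (ends G e) \<Longrightarrow> cmap G e v = v" unfolding cmap_def by simp
lemma cmap_in: "v \<in> verts G \<Longrightarrow> wf_graph G \<Longrightarrow> e \<in> edges G \<Longrightarrow> cmap G e v \<in> verts G"
  unfolding cmap_def using wfD by auto

lemma wf_con: assumes "wf_graph G" "e \<in> edges G" shows "wf_graph (contract G e)"
proof -
  have "\<forall>d\<in>edges G - {e}. fst (map_prod (cmap G e) (cmap G e) (ends G d)) \<in> cmap G e ` verts G \<and>
      snd (map_prod (cmap G e) (cmap G e) (ends G d)) \<in> cmap G e ` verts G \<and> len G d > 0"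
    using wfD[OF assms(1)] by (simp add: fst_map_prod snd_map_prod)
  then show ?thesis using assms unfolding wf_graph_def by simp
qed

lemma vadj_con:
  assumes "vadj G a b"
  shows "cmap G e a = cmap G e b \<or> vadj (contract G e) (cmap G e a) (cmap G e b)"
proof -
  obtain d where d: "d \<in> edges G" "ends G d = (a, b) \<or> ends G d = (b, a)" using assms unfolding vadj_def by blast
  show ?thesis
  proof (cases "d = e")
    case True
    then have "{a, b} = {fst (ends G e), snd (ends G e)}" using d(2) by auto
    then have "cmap G e a = fst (ends G e)" "cmap G e b = fst (ends G e)" by (auto simp: doubleton_eq_iff)
    then show ?thesis by simp
  next
    case False
    then have "d \<in> edges (contract G e)" using d by simp
    moreover have "ends (contract G e) d = (cmap G e a, cmap G e b) \<or> ends (contract G e) d = (cmap G e b, cmap G e a)"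
      using d(2) by auto
    ultimately show ?thesis unfolding vadj_def by blast
  qed
qed

lemma path_con:
  assumes "(vadj G)\<^sup>*\<^sup>* a b"
  shows "(vadj (contract G e))\<^sup>*\<^sup>* (cmap G e a) (cmap G e b)"
  using assms
proof (induction rule: rtranclp_induct)
  case base then show ?case by simp
next
  case (step y z)
  from vadj_con[OF step(2), of e] show ?case
  proof
    assume "cmap G e y = cmap G e z" then show ?thesis using step(3) by simp
  next
    assume "vadj (contract G e) (cmap G e y) (cmap G e z)"
    then show ?thesis using step(3) by (rule rtranclp.rtrancl_into_rtrancl[rotated])
  qed
qed

lemma conn_con: assumes "connected_graph G" shows "connected_graph (contract G e)"
  unfolding connected_graph_def
proof (intro ballI)
  fix u v assume "u \<in> verts (contract G e)" "v \<in> verts (contract G e)"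
  then obtain u0 v0 where "u0 \<in> verts G" "v0 \<in> verts G" "u = cmap G e u0" "v = cmap G e v0" by auto
  then show "(vadj (contract G e))\<^sup>*\<^sup>* u v" using path_con[OF conn_path[OF assms]] by simp
qed

lemma points_con_Vtx: "Vtx w \<in> points (contract G e) \<longleftrightarrow> w \<in> cmap G e ` verts G"
  by (simp add: Vtx_points_iff)
lemma points_con_Pt: "Pt d a \<in> points (contract G e) \<longleftrightarrow> d \<in> edges G \<and> d \<noteq> e \<and> 0 < a \<and> a < len G d"
  by (auto simp: Pt_points_iff)

lemma cpt_points:
  assumes "s \<in> points (del_edge G e)"
  shows "cpt G e s \<in> points (contract G e)"
  using assms
proof (cases rule: points_cases)
  case (1 v) then show ?thesis by (simp add: cpt_def points_con_Vtx)
next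
  case (2 d a) then show ?thesis by (simp add: cpt_def points_con_Pt)
qed

definition lift :: "('v,'e) mgraph \<Rightarrow> 'e \<Rightarrow> (('v,'e) pt \<Rightarrow> real) \<Rightarrow> ('v,'e) pt \<Rightarrow> real" where
  "lift G e g x = (if x \<in> points G then (case x of Vtx v \<Rightarrow> g (Vtx (cmap G e v))
      | Pt d a \<Rightarrow> if d = e then g (Vtx (fst (ends G e))) else g (Pt d a)) else 0)"

lemma lift_cpt:
  assumes "s \<in> points (del_edge G e)"
  shows "lift G e g s = g (cpt G e s)"
proof -
  have sG: "s \<in> points G" using points_del_sub[OF assms] .
  from assms show ?thesis
  proof (cases rule: points_cases)
    case (1 v) then show ?thesis unfolding lift_def cpt_def using sG by simp
  next
    case (2 d a) then show ?thesis unfolding lift_def cpt_def using sG by simp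
  qed
qed

lemma ef_lift_other:
  assumes "wf_graph G" "d \<in> edges G" "d \<noteq> e"
  shows "edge_fun G (lift G e g) d y = edge_fun (contract G e) g d y"
proof -
  have L: "len G d > 0" using wfD[OF assms(1,2)] by simp
  have p: "Vtx (fst (ends G d)) \<in> points G" "Vtx (snd (ends G d)) \<in> points G"
    using wfD[OF assms(1,2)] by (simp_all add: Vtx_points_iff)
  consider "y \<le> 0" | "len G d \<le> y" "\<not> y \<le> 0" | "0 < y" "y < len G d" by force
  then show ?thesis
  proof cases
    case 1 then show ?thesis unfolding edge_fun_def lift_def using p
      by (simp add: map_prod_def split: prod.split)
  next
    case 2 then show ?thesis unfolding edge_fun_def lift_def using p
      by (simp add: map_prod_def split: prod.split)
  next
    case 3
    then have "Pt d y \<in> points G" using assms(2) by (simp add: Pt_points_iff)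
    then show ?thesis unfolding edge_fun_def lift_def using 3 assms(3) by simp
  qed
qed

lemma ef_lift_e:
  assumes "wf_graph G" "e \<in> edges G"
  shows "edge_fun G (lift G e g) e y = g (Vtx (fst (ends G e)))"
proof -
  have L: "len G e > 0" using wfD[OF assms] by simp
  have p: "Vtx (fst (ends G e)) \<in> points G" "Vtx (snd (ends G e)) \<in> points G"
    using wfD[OF assms] by (simp_all add: Vtx_points_iff)
  consider "y \<le> 0" | "len G e \<le> y" "\<not> y \<le> 0" | "0 < y" "y < len G e" by force
  then show ?thesis
  proof cases
    case 1 then show ?thesis unfolding edge_fun_def lift_def using p by simp
  next
    case 2 then show ?thesis unfolding edge_fun_def lift_def using p by simp
  next
    case 3
    then have "Pt e y \<in> points G" using assms(2) by (simp add: Pt_points_iff)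
    then show ?thesis unfolding edge_fun_def lift_def using 3 by simp
  qed
qed

lemma lift_basic:
  assumes "wf_graph G" "e \<in> edges G" "hc (contract G e) g c"
  shows "cpwl G (lift G e g)" "\<forall>x. x \<notin> points G \<longrightarrow> lift G e g x = 0"
proof -
  show "cpwl G (lift G e g)" unfolding cpwl_pa
  proof
    fix d assume d: "d \<in> edges G"
    show "\<exists>P. finite P \<and> pa P (edge_fun G (lift G e g) d) 0 (len G d)"
    proof (cases "d = e")
      case True
      have "\<forall>y\<in>{0..len G d}. edge_fun G (lift G e g) d y = g (Vtx (fst (ends G e)))"
        using ef_lift_e[OF assms(1,2)] True by simp
      then have "pa {} (edge_fun G (lift G e g) d) 0 (len G d)" by (rule pa_const)
      then show ?thesis by blast
    next
      case False
      then have "d \<in> edges (contract G e)" using d by simp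
      then obtain P where "finite P" "pa P (edge_fun (contract G e) g d) 0 (len (contract G e) d)"
        using hc_pa[OF assms(3)] by blast
      moreover have "edge_fun G (lift G e g) d = edge_fun (contract G e) g d"
        using ef_lift_other[OF assms(1) d False] by (intro ext) simp
      ultimately show ?thesis by auto
    qed
  qed
  show "\<forall>x. x \<notin> points G \<longrightarrow> lift G e g x = 0" unfolding lift_def by simp
qed

lemma lift_flux:
  assumes "wf_graph G" "e \<in> edges G" "hc (contract G e) g c"
  defines "p \<equiv> fst (ends G e)" and "q \<equiv> snd (ends G e)"
  shows "\<And>v. v \<noteq> p \<Longrightarrow> v \<noteq> q \<Longrightarrow> outflux G (lift G e g) (Vtx v) = outflux (contract G e) g (Vtx v)"
    and "p \<noteq> q \<Longrightarrow> outflux G (lift G e g) (Vtx p) + outflux G (lift G e g) (Vtx q) = outflux (contract G e) g (Vtx p)"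
    and "p = q \<Longrightarrow> outflux G (lift G e g) (Vtx p) = outflux (contract G e) g (Vtx p)"
    and "\<And>d a. d \<in> edges G \<Longrightarrow> d \<noteq> e \<Longrightarrow> outflux G (lift G e g) (Pt d a) = outflux (contract G e) g (Pt d a)"
    and "\<And>a. 0 < a \<Longrightarrow> a < len G e \<Longrightarrow> outflux G (lift G e g) (Pt e a) = 0"
proof -
  let ?Gc = "contract G e"
  let ?F = "lift G e g"
  have fE: "finite (edges G)" using wf_fin(1)[OF assms(1)] .
  have fE': "finite (edges ?Gc)" using fE by simp
  have L: "len G e > 0" using wfD[OF assms(1,2)] by simp
  have cst: "\<forall>y\<in>{0..len G e}. edge_fun G ?F e y = g (Vtx p)" using ef_lift_e[OF assms(1,2)] p_def by simp
  have eR: "dslope_right (edge_fun G ?F e) y = 0" if "0 \<le> y" "y < len G e" for y using dR_const[OF that cst] .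
  have eL: "dslope_left (edge_fun G ?F e) y = 0" if "0 < y" "y \<le> len G e" for y using dL_const[OF that cst] .
  have efo: "edge_fun G ?F d = edge_fun ?Gc g d" if "d \<in> edges G - {e}" for d
    using ef_lift_other[OF assms(1)] that by (intro ext) simp
  define A where "A d = dslope_right (edge_fun ?Gc g d) 0" for d
  define B where "B d = dslope_left (edge_fun ?Gc g d) (len G d)" for d
  have oG: "outflux G ?F (Vtx v) = (\<Sum>d\<in>edges G - {e}. (if fst (ends G d) = v then A d else 0) + (if snd (ends G d) = v then B d else 0))" for v
  proof -
    have "outflux G ?F (Vtx v) = (\<Sum>d\<in>edges G. (if fst (ends G d) = v then dslope_right (edge_fun G ?F d) 0 else 0)
      + (if snd (ends G d) = v then dslope_left (edge_fun G ?F d) (len G d) else 0))" by (rule outflux_Vtx[OF fE])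
    also have "\<dots> = (\<Sum>d\<in>edges G - {e}. (if fst (ends G d) = v then dslope_right (edge_fun G ?F d) 0 else 0)
      + (if snd (ends G d) = v then dslope_left (edge_fun G ?F d) (len G d) else 0))"
      by (subst sum.remove[OF fE assms(2)]) (simp add: eR[of 0] eL[of "len G e"] L)
    also have "\<dots> = (\<Sum>d\<in>edges G - {e}. (if fst (ends G d) = v then A d else 0) + (if snd (ends G d) = v then B d else 0))"
      unfolding A_def B_def by (intro sum.cong refl) (simp add: efo)
    finally show ?thesis .
  qed
  have oC: "outflux ?Gc g (Vtx w) = (\<Sum>d\<in>edges G - {e}. (if cmap G e (fst (ends G d)) = w then A d else 0) + (if cmap G e (snd (ends G d)) = w then B d else 0))" for w
    unfolding outflux_Vtx[OF fE'] A_def B_def con_simps by (simp add: fst_map_prod snd_map_prod)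
  show "outflux G ?F (Vtx v) = outflux ?Gc g (Vtx v)" if "v \<noteq> p" "v \<noteq> q" for v
  proof -
    have "cmap G e x = v \<longleftrightarrow> x = v" for x using that unfolding cmap_def p_def q_def by auto
    then show ?thesis unfolding oG oC by simp
  qed
  show "outflux G ?F (Vtx p) + outflux G ?F (Vtx q) = outflux ?Gc g (Vtx p)" if "p \<noteq> q"
  proof -
    have c: "(if cmap G e x = p then X else 0) = (if x = p then X else 0) + (if x = q then X else 0)" for x and X :: real
      using that unfolding cmap_def p_def q_def by auto
    show ?thesis unfolding oG oC c sum.distrib[symmetric] by (intro sum.cong refl) simp
  qed
  show "outflux G ?F (Vtx p) = outflux ?Gc g (Vtx p)" if "p = q"
  proof -
    have "cmap G e x = x" for x using that unfolding cmap_def p_def q_def by auto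
    then show ?thesis unfolding oG oC by simp
  qed
  show "outflux G ?F (Pt d a) = outflux ?Gc g (Pt d a)" if "d \<in> edges G" "d \<noteq> e" for d a
    unfolding outflux_Pt using efo that by simp
  show "outflux G ?F (Pt e a) = 0" if "0 < a" "a < len G e" for a
    unfolding outflux_Pt using eR[of a] eL[of a] that by simp
qed



section \<open>Bridges\<close>

lemma vadj_del: "vadj (del_edge G e) a b \<Longrightarrow> vadj G a b"
  unfolding vadj_def by auto

lemma vadj_del_or:
  assumes "vadj G a b"
  shows "vadj (del_edge G e) a b \<or> {a, b} = {fst (ends G e), snd (ends G e)}"
proof -
  obtain d where d: "d \<in> edges G" "ends G d = (a, b) \<or> ends G d = (b, a)" using assms unfolding vadj_def by blast
  show ?thesis
  proof (cases "d = e")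
    case True then show ?thesis using d(2) by auto
  next
    case False
    then have "d \<in> edges (del_edge G e)" using d(1) by simp
    then have "vadj (del_edge G e) a b" using d(2) unfolding vadj_def by auto
    then show ?thesis by simp
  qed
qed

lemma bridge_not_pq:
  assumes "wf_graph G" "connected_graph G" "e \<in> edges G" "is_bridge G e"
  shows "\<not> (vadj (del_edge G e))\<^sup>*\<^sup>* (fst (ends G e)) (snd (ends G e))"
proof
  let ?G' = "del_edge G e"
  assume pq: "(vadj ?G')\<^sup>*\<^sup>* (fst (ends G e)) (snd (ends G e))"
  have qp: "(vadj ?G')\<^sup>*\<^sup>* (snd (ends G e)) (fst (ends G e))" by (rule rtranclp_vadj_sym[OF pq])
  have stp: "(vadj ?G')\<^sup>*\<^sup>* a b" if "vadj G a b" for a b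
  proof -
    from vadj_del_or[OF that, of e] show ?thesis
    proof
      assume "vadj ?G' a b" then show ?thesis by simp
    next
      assume ab: "{a, b} = {fst (ends G e), snd (ends G e)}"
      then consider "a = fst (ends G e)" "b = snd (ends G e)" | "a = snd (ends G e)" "b = fst (ends G e)"
        | "a = b" by (auto simp: doubleton_eq_iff)
      then show ?thesis using pq qp by cases auto
    qed
  qed
  have "(vadj ?G')\<^sup>*\<^sup>* a b" if "(vadj G)\<^sup>*\<^sup>* a b" for a b
    using that
  proof (induction rule: rtranclp_induct)
    case base then show ?case by simp
  next
    case (step y z) show ?case using rtranclp_trans[OF step(3) stp[OF step(2)]] .
  qed
  then have "connected_graph ?G'" using assms(2) unfolding connected_graph_def by simp
  then show False using assms(4) unfolding is_bridge_def by simp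
qed

lemma bridge_cover:
  assumes "wf_graph G" "connected_graph G" "e \<in> edges G" "v \<in> verts G"
  shows "(vadj (del_edge G e))\<^sup>*\<^sup>* (fst (ends G e)) v \<or> (vadj (del_edge G e))\<^sup>*\<^sup>* (snd (ends G e)) v"
proof -
  let ?G' = "del_edge G e"
  have "(vadj G)\<^sup>*\<^sup>* (fst (ends G e)) v" using conn_path[OF assms(2) wfD(2)[OF assms(1,3)] assms(4)] .
  then show ?thesis
  proof (induction rule: rtranclp_induct)
    case base then show ?case by simp
  next
    case (step y z)
    from vadj_del_or[OF step(2), of e] show ?case
    proof
      assume "vadj ?G' y z"
      then show ?thesis using step(3) by (meson rtranclp.rtrancl_into_rtrancl)
    next
      assume "{y, z} = {fst (ends G e), snd (ends G e)}"
      then have "z = fst (ends G e) \<or> z = snd (ends G e)" by auto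
      then show ?thesis by auto
    qed
  qed
qed

definition bside :: "('v,'e) mgraph \<Rightarrow> 'e \<Rightarrow> 'v \<Rightarrow> bool" where
  "bside G e v = (vadj (del_edge G e))\<^sup>*\<^sup>* (fst (ends G e)) v"

definition bfun :: "('v,'e) mgraph \<Rightarrow> 'e \<Rightarrow> ('v,'e) pt \<Rightarrow> real" where
  "bfun G e x = (case x of Vtx v \<Rightarrow> (if v \<in> verts G \<and> \<not> bside G e v then len G e else 0)
     | Pt d a \<Rightarrow> (if d \<in> edges G \<and> 0 < a \<and> a < len G d then
          (if d = e then a else if bside G e (fst (ends G d)) then 0 else len G e) else 0))"

lemma bside_adj:
  assumes "(vadj (del_edge G e))\<^sup>*\<^sup>* a b"
  shows "bside G e a \<longleftrightarrow> bside G e b"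
proof
  assume "bside G e a" then show "bside G e b" using assms unfolding bside_def by (rule rtranclp_trans)
next
  assume "bside G e b" then show "bside G e a" using rtranclp_vadj_sym[OF assms] unfolding bside_def by (rule rtranclp_trans)
qed

lemma bside_edge:
  assumes "d \<in> edges G" "d \<noteq> e"
  shows "bside G e (snd (ends G d)) \<longleftrightarrow> bside G e (fst (ends G d))"
proof -
  have "vadj (del_edge G e) (fst (ends G d)) (snd (ends G d))" unfolding vadj_def using assms by auto
  then show ?thesis using bside_adj by (metis r_into_rtranclp)
qed

lemma bridge_props:
  assumes "wf_graph G" "connected_graph G" "e \<in> edges G" "is_bridge G e"
  defines "p \<equiv> fst (ends G e)" and "q \<equiv> snd (ends G e)"
  shows "bside G e p" "\<not> bside G e q" "p \<noteq> q"
    and "\<And>a b. a \<in> verts G \<Longrightarrow> b \<in> verts G \<Longrightarrow> (vadj (del_edge G e))\<^sup>*\<^sup>* a b \<longleftrightarrow> (bside G e a \<longleftrightarrow> bside G e b)"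
proof -
  show bp: "bside G e p" unfolding bside_def p_def by simp
  show bq: "\<not> bside G e q" unfolding bside_def p_def q_def using bridge_not_pq[OF assms(1-4)] .
  show "p \<noteq> q" using bp bq by auto
  fix a b assume a: "a \<in> verts G" and b: "b \<in> verts G"
  show "(vadj (del_edge G e))\<^sup>*\<^sup>* a b \<longleftrightarrow> (bside G e a \<longleftrightarrow> bside G e b)"
  proof
    assume "(vadj (del_edge G e))\<^sup>*\<^sup>* a b" then show "bside G e a \<longleftrightarrow> bside G e b" by (rule bside_adj)
  next
    assume ab: "bside G e a \<longleftrightarrow> bside G e b"
    show "(vadj (del_edge G e))\<^sup>*\<^sup>* a b"
    proof (cases "bside G e a")
      case True
      then have "(vadj (del_edge G e))\<^sup>*\<^sup>* p a" "(vadj (del_edge G e))\<^sup>*\<^sup>* p b" using ab unfolding bside_def p_def by auto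
      then show ?thesis using rtranclp_vadj_sym rtranclp_trans by metis
    next
      case False
      then have "(vadj (del_edge G e))\<^sup>*\<^sup>* q a" "(vadj (del_edge G e))\<^sup>*\<^sup>* q b"
        using ab bridge_cover[OF assms(1-3) a] bridge_cover[OF assms(1-3) b] unfolding bside_def p_def q_def by auto
      then show ?thesis using rtranclp_vadj_sym rtranclp_trans by metis
    qed
  qed
qed

lemma bfun_hc:
  assumes "wf_graph G" "connected_graph G" "e \<in> edges G" "is_bridge G e"
  defines "p \<equiv> fst (ends G e)" and "q \<equiv> snd (ends G e)"
  shows "hc G (bfun G e) (chg (Vtx q) (Vtx p))"
    and "bfun G e (Vtx p) = 0" "bfun G e (Vtx q) = len G e"
    and "\<And>x. x \<in> points (del_edge G e) \<Longrightarrow> bfun G e x = (if bside G e (anchor (del_edge G e) x) then 0 else len G e)"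
proof -
  note bp = bridge_props[OF assms(1-4)]
  have L: "len G e > 0" using wfD[OF assms(1,3)] by simp
  have pV: "p \<in> verts G" "q \<in> verts G" using wfD[OF assms(1,3)] p_def q_def by auto
  have ef_o: "\<forall>y\<in>{0..len G d}. edge_fun G (bfun G e) d y = (if bside G e (fst (ends G d)) then 0 else len G e)"
    if d: "d \<in> edges G" "d \<noteq> e" for d
  proof
    fix y assume y: "y \<in> {0..len G d}"
    have V: "fst (ends G d) \<in> verts G" "snd (ends G d) \<in> verts G" using wfD[OF assms(1) d(1)] by auto
    have Ld: "len G d > 0" using wfD[OF assms(1) d(1)] by auto
    consider "y = 0" | "y = len G d" | "0 < y \<and> y < len G d" using y by force
    then show "edge_fun G (bfun G e) d y = (if bside G e (fst (ends G d)) then 0 else len G e)"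
    proof cases
      case 1 then show ?thesis unfolding edge_fun_def bfun_def using V by simp
    next
      case 2 then show ?thesis unfolding edge_fun_def bfun_def using V Ld bside_edge[OF d] by simp
    next
      case 3 then show ?thesis unfolding edge_fun_def bfun_def using d by simp
    qed
  qed
  have ef_e: "\<forall>y\<in>{0..len G e}. edge_fun G (bfun G e) e y = 0 + 1 * y"
  proof
    fix y assume y: "y \<in> {0..len G e}"
    consider "y = 0" | "y = len G e" | "0 < y \<and> y < len G e" using y by force
    then show "edge_fun G (bfun G e) e y = 0 + 1 * y"
    proof cases
      case 1 then show ?thesis unfolding edge_fun_def bfun_def using pV bp(1) p_def by simp
    next
      case 2 then show ?thesis unfolding edge_fun_def bfun_def using pV bp(2) q_def L by simp
    next
      case 3 then show ?thesis unfolding edge_fun_def bfun_def using assms(3) by simp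
    qed
  qed
  have cp: "cpwl G (bfun G e)" unfolding cpwl_pa
  proof
    fix d assume d: "d \<in> edges G"
    show "\<exists>P. finite P \<and> pa P (edge_fun G (bfun G e) d) 0 (len G d)"
    proof (cases "d = e")
      case True
      have "pa {} (edge_fun G (bfun G e) d) 0 (len G d)" using pa_aff[OF ef_e] True by simp
      then show ?thesis by blast
    next
      case False
      have "pa {} (edge_fun G (bfun G e) d) 0 (len G d)" using pa_const[OF ef_o[OF d False]] .
      then show ?thesis by blast
    qed
  qed
  have zo: "\<forall>x. x \<notin> points G \<longrightarrow> bfun G e x = 0"
  proof (intro allI impI)
    fix x assume x: "x \<notin> points G"
    show "bfun G e x = 0"
    proof (cases x)
      case (Vtx v) then show ?thesis using x unfolding bfun_def by (simp add: Vtx_points_iff)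
    next
      case (Pt d a)
      then have "\<not> (d \<in> edges G \<and> 0 < a \<and> a < len G d)" using x by (simp add: Pt_points_iff)
      then show ?thesis unfolding Pt bfun_def by auto
    qed
  qed
  have fE: "finite (edges G)" using wf_fin(1)[OF assms(1)] .
  have o: "outflux G (bfun G e) x = chg (Vtx q) (Vtx p) x" if x: "x \<in> points G" for x
    using x
  proof (cases rule: points_cases)
    case (1 v)
    have z: "(if fst (ends G d) = v then dslope_right (edge_fun G (bfun G e) d) 0 else 0) +
        (if snd (ends G d) = v then dslope_left (edge_fun G (bfun G e) d) (len G d) else 0) = 0"
      if d: "d \<in> edges G - {e}" for d
    proof -
      have dd: "d \<in> edges G" "d \<noteq> e" using d by auto
      have Ld: "len G d > 0" using wfD[OF assms(1) dd(1)] by auto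
      show ?thesis using dR_const[OF _ Ld ef_o[OF dd]] dL_const[OF Ld _ ef_o[OF dd]] by simp
    qed
    have "outflux G (bfun G e) (Vtx v) = (if p = v then 1 else 0) + (if q = v then -1 else 0)"
      unfolding outflux_Vtx[OF fE]
      apply (subst sum.remove[OF fE assms(3)])
      using sum.neutral[of "edges G - {e}", OF ballI[OF z]] dR_aff[OF _ L ef_e] dL_aff[OF L _ ef_e]
      unfolding p_def q_def by simp
    then show ?thesis unfolding 1 chg_def using bp(3) by auto
  next
    case (2 d a)
    show ?thesis
    proof (cases "d = e")
      case True
      then show ?thesis unfolding 2 outflux_Pt chg_def using dR_aff[OF _ _ ef_e, of a] dL_aff[OF _ _ ef_e, of a] 2 by simp
    next
      case False
      then show ?thesis unfolding 2 outflux_Pt chg_def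
        using dR_const[OF _ _ ef_o[OF 2(2) False], of a] dL_const[OF _ _ ef_o[OF 2(2) False], of a] 2 by simp
    qed
  qed
  show "hc G (bfun G e) (chg (Vtx q) (Vtx p))" unfolding hc_def using cp zo o by blast
  show "bfun G e (Vtx p) = 0" unfolding bfun_def using bp(1) by (simp add: p_def)
  show "bfun G e (Vtx q) = len G e" unfolding bfun_def using bp(2) pV by (simp add: q_def)
  fix x assume x: "x \<in> points (del_edge G e)"
  then show "bfun G e x = (if bside G e (anchor (del_edge G e) x) then 0 else len G e)"
  proof (cases rule: points_cases)
    case (1 v) then show ?thesis unfolding bfun_def anchor_def by simp
  next
    case (2 d a) then show ?thesis unfolding bfun_def anchor_def by simp
  qed
qed



definition tent :: "('v,'e) mgraph \<Rightarrow> 'e \<Rightarrow> real \<Rightarrow> ('v,'e) pt \<Rightarrow> real" where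
  "tent G d a x = (case x of Pt d' y \<Rightarrow> (if d' = d \<and> 0 < y \<and> y < len G d then
      (if y \<le> a then y * (len G d - a) / len G d else a * (len G d - y) / len G d) else 0) | Vtx v \<Rightarrow> 0)"

lemma tent_hc:
  assumes "wf_graph G" "d \<in> edges G" "0 < a" "a < len G d"
  defines "L \<equiv> len G d"
  shows "hc G (tent G d a) (\<lambda>x. (if x = Vtx (fst (ends G d)) then (L - a) / L else 0)
     + (if x = Vtx (snd (ends G d)) then a / L else 0) - (if x = Pt d a then 1 else 0))"
proof -
  have L: "L > 0" using wfD[OF assms(1,2)] L_def by simp
  have e1: "\<forall>y\<in>{0..a}. edge_fun G (tent G d a) d y = 0 + ((L - a) / L) * y"
  proof
    fix y assume y: "y \<in> {0..a}"
    show "edge_fun G (tent G d a) d y = 0 + ((L - a) / L) * y"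
    proof (cases "y = 0")
      case True then show ?thesis unfolding edge_fun_def tent_def by simp
    next
      case False
      then have "0 < y" "y < L" using y assms(4) L_def by auto
      then show ?thesis unfolding edge_fun_def tent_def using y L_def by simp
    qed
  qed
  have e2: "\<forall>y\<in>{a..L}. edge_fun G (tent G d a) d y = a + (- a / L) * y"
  proof
    fix y assume y: "y \<in> {a..L}"
    show "edge_fun G (tent G d a) d y = a + (- a / L) * y"
    proof (cases "y = L")
      case True then show ?thesis unfolding edge_fun_def tent_def using L L_def assms(3) by simp
    next
      case False
      then have "0 < y" "y < L" using y assms(3) by auto
      moreover have "a * (L - y) / L = a + (- a / L) * y" using L by (simp add: field_simps)
      moreover have "y \<le> a \<Longrightarrow> y * (L - a) / L = a + (- a / L) * y"
      proof -
        assume "y \<le> a" then have "y = a" using y by simp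
        then show ?thesis using L by (simp add: field_simps)
      qed
      ultimately show ?thesis unfolding edge_fun_def tent_def using y L_def by auto
    qed
  qed
  have e0: "\<forall>y\<in>{0..len G d'}. edge_fun G (tent G d a) d' y = 0" if "d' \<noteq> d" for d'
    unfolding edge_fun_def tent_def using that by simp
  have cp: "cpwl G (tent G d a)" unfolding cpwl_pa
  proof
    fix d' assume d': "d' \<in> edges G"
    show "\<exists>P. finite P \<and> pa P (edge_fun G (tent G d a) d') 0 (len G d')"
    proof (cases "d' = d")
      case False
      then show ?thesis using pa_const[OF e0[OF False]] by blast
    next
      case True
      have "pa {a} (edge_fun G (tent G d a) d) 0 L" unfolding pa_def
      proof (intro allI impI)
        fix c c' assume h: "0 \<le> c \<and> c < c' \<and> c' \<le> L \<and> {c<..<c'} \<inter> {a} = {}"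
        then have "c' \<le> a \<or> a \<le> c" by auto
        then show "\<exists>\<alpha> \<beta>. \<forall>x\<in>{c..c'}. edge_fun G (tent G d a) d x = \<alpha> + \<beta> * x"
        proof
          assume "c' \<le> a"
          then have "\<forall>x\<in>{c..c'}. edge_fun G (tent G d a) d x = 0 + ((L - a) / L) * x"
            using e1 h by (meson atLeastAtMost_iff order_trans)
          then show ?thesis by blast
        next
          assume "a \<le> c"
          then have "\<forall>x\<in>{c..c'}. edge_fun G (tent G d a) d x = a + (- a / L) * x"
            using e2 h by (meson atLeastAtMost_iff order_trans)
          then show ?thesis by blast
        qed
      qed
      then show ?thesis using True L_def by blast
    qed
  qed
  have zo: "\<forall>x. x \<notin> points G \<longrightarrow> tent G d a x = 0"
  proof (intro allI impI)
    fix x assume x: "x \<notin> points G"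
    show "tent G d a x = 0"
    proof (cases x)
      case (Vtx v) then show ?thesis unfolding tent_def by simp
    next
      case (Pt d' y)
      then have "\<not> (d' = d \<and> 0 < y \<and> y < len G d)" using x assms(2) by (auto simp: Pt_points_iff)
      then show ?thesis unfolding Pt tent_def by auto
    qed
  qed
  have fE: "finite (edges G)" using wf_fin(1)[OF assms(1)] .
  have o: "outflux G (tent G d a) x = (if x = Vtx (fst (ends G d)) then (L - a) / L else 0)
     + (if x = Vtx (snd (ends G d)) then a / L else 0) - (if x = Pt d a then 1 else 0)" if x: "x \<in> points G" for x
    using x
  proof (cases rule: points_cases)
    case (1 v)
    have z: "(if fst (ends G d') = v then dslope_right (edge_fun G (tent G d a) d') 0 else 0) +
        (if snd (ends G d') = v then dslope_left (edge_fun G (tent G d a) d') (len G d') else 0) = 0"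
      if d': "d' \<in> edges G - {d}" for d'
    proof -
      have dd: "d' \<noteq> d" using d' by auto
      have Ld: "len G d' > 0" using wfD[OF assms(1)] d' by auto
      show ?thesis using dR_const[OF _ Ld e0[OF dd]] dL_const[OF Ld _ e0[OF dd]] by simp
    qed
    have r0: "dslope_right (edge_fun G (tent G d a) d) 0 = (L - a) / L" using dR_aff[OF _ assms(3) e1] by simp
    have lL: "dslope_left (edge_fun G (tent G d a) d) L = a / L" using dL_aff[OF assms(4)[folded L_def] _ e2] by simp
    have "outflux G (tent G d a) (Vtx v) = (if fst (ends G d) = v then (L - a) / L else 0) + (if snd (ends G d) = v then a / L else 0)"
      unfolding outflux_Vtx[OF fE]
      apply (subst sum.remove[OF fE assms(2)])
      using sum.neutral[of "edges G - {d}", OF ballI[OF z]] r0 lL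
      unfolding L_def by simp
    then show ?thesis unfolding 1 by auto
  next
    case (2 d' y)
    show ?thesis
    proof (cases "d' = d")
      case False
      then show ?thesis unfolding 2 outflux_Pt
        using dR_const[OF _ _ e0[OF False], of y] dL_const[OF _ _ e0[OF False], of y] 2 by simp
    next
      case True
      consider "y < a" | "y = a" | "a < y" by force
      then show ?thesis
      proof cases
        case 1
        then show ?thesis unfolding 2 outflux_Pt True
          using dR_aff[OF _ 1 e1] dL_aff[OF _ _ e1, of y] 2 True by simp
      next
        case 2
        have "dslope_right (edge_fun G (tent G d a) d) a + dslope_left (edge_fun G (tent G d a) d) a = - 1"
        proof -
          have r: "dslope_right (edge_fun G (tent G d a) d) a = - a / L" using dR_aff[OF _ assms(4)[folded L_def] e2] by simp
          have l: "dslope_left (edge_fun G (tent G d a) d) a = - ((L - a) / L)" using dL_aff[OF assms(3) _ e1] by simp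
          have "- a / L + - ((L - a) / L) = - 1" using L by (simp add: field_simps)
          then show ?thesis using r l by simp
        qed
        then show ?thesis unfolding \<open>x = Pt d' y\<close> outflux_Pt True 2 by simp
      next
        case 3
        then show ?thesis unfolding 2 outflux_Pt True
          using dR_aff[OF _ _ e2, of y] dL_aff[OF 3 _ e2] 2 True L_def by simp
      qed
    qed
  qed
  show ?thesis unfolding hc_def using cp zo o by blast
qed



lemma hc_add: "wf_graph G \<Longrightarrow> hc G f c1 \<Longrightarrow> hc G g c2 \<Longrightarrow> hc G (\<lambda>x. f x + g x) (\<lambda>x. c1 x + c2 x)"
  using hc_lin[of G f c1 g c2 1 1] by simp

lemma hc_scale: assumes "wf_graph G" "hc G f c" shows "hc G (\<lambda>x. k * f x) (\<lambda>x. k * c x)"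
proof -
  have "hc G (\<lambda>x. k * f x + 0 * (\<lambda>_. 0::real) x) (\<lambda>x. k * c x + 0 * (\<lambda>_. 0::real) x)"
    by (rule hc_lin[OF assms hc_zero])
  then show ?thesis by simp
qed

lemma hc_add_chg:
  assumes "wf_graph G" "hc G f (chg a b)" "hc G g (chg b c)"
  shows "\<exists>h. hc G h (chg a c)"
proof -
  have "hc G (\<lambda>x. f x + g x) (\<lambda>x. chg a b x + chg b c x)" by (rule hc_add[OF assms])
  moreover have "\<And>x. chg a b x + chg b c x = chg a c x" by (simp add: chg_def)
  ultimately have "hc G (\<lambda>x. f x + g x) (chg a c)" by (rule hc_cong) simp_all
  then show ?thesis by blast
qed

lemma hc_neg_chg:
  assumes "wf_graph G" "hc G f (chg a b)"
  shows "\<exists>h. hc G h (chg b a)"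
proof -
  have "hc G (\<lambda>x. (-1) * f x) (\<lambda>x. (-1) * chg a b x)" by (rule hc_scale[OF assms])
  moreover have "\<And>x. (-1) * chg a b x = chg b a x" by (simp add: chg_def)
  ultimately have "hc G (\<lambda>x. (-1) * f x) (chg b a)" by (rule hc_cong) simp_all
  then show ?thesis by blast
qed

lemma hc_refl_chg: "\<exists>h. hc G h (chg a a)"
proof -
  have "hc G (\<lambda>_. 0) (chg a a)" by (rule hc_cong[OF hc_zero]) (simp_all add: chg_def)
  then show ?thesis by blast
qed

lemma exist_step1:
  fixes G :: "('v,'e) mgraph"
  assumes "wf_graph G" "connected_graph G" "d \<in> edges G"
    and IH: "\<And>(H :: ('v,'e) mgraph) y z. card (edges H) < card (edges G) \<Longrightarrow> wf_graph H \<Longrightarrow> connected_graph H \<Longrightarrow>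
       y \<in> points H \<Longrightarrow> z \<in> points H \<Longrightarrow> \<exists>f. hc H f (chg y z)"
  shows "\<exists>f. hc G f (chg (Vtx (fst (ends G d))) (Vtx (snd (ends G d))))"
proof -
  define p where "p = fst (ends G d)"
  define q where "q = snd (ends G d)"
  have pV: "p \<in> verts G" "q \<in> verts G" using wfD[OF assms(1,3)] p_def q_def by auto
  have L: "len G d > 0" using wfD[OF assms(1,3)] by simp
  have "\<exists>f. hc G f (chg (Vtx p) (Vtx q))"
  proof (cases "p = q")
    case True then show ?thesis using hc_refl_chg[of G "Vtx p"] by simp
  next
    case pq: False
    show ?thesis
    proof (cases "is_bridge G d")
      case True
      have "hc G (bfun G d) (chg (Vtx q) (Vtx p))" using bfun_hc(1)[OF assms(1-3) True] p_def q_def by simp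
      then show ?thesis using hc_neg_chg[OF assms(1)] by blast
    next
      case False
      let ?G' = "del_edge G d"
      have wf': "wf_graph ?G'" by (rule wf_del[OF assms(1)])
      have conn': "connected_graph ?G'" using False unfolding is_bridge_def by simp
      have fE: "finite (edges G)" using wf_fin(1)[OF assms(1)] .
      have card: "card (edges ?G') < card (edges G)" using card_Diff1_less[OF fE assms(3)] by simp
      have pG': "Vtx p \<in> points ?G'" "Vtx q \<in> points ?G'" using pV by (simp_all add: Vtx_points_iff)
      obtain h where h: "hc ?G' h (chg (Vtx p) (Vtx q))" using IH[OF card wf' conn' pG'] by blast
      have pos: "h (Vtx q) < h (Vtx p)" using resist_pos[OF wf' conn' h pG'] pq by simp
      define \<sigma> where "\<sigma> = (h (Vtx q) - h (Vtx p)) / len G d"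
      have sneg: "\<sigma> < 0" unfolding \<sigma>_def using pos L by (simp add: divide_neg_pos)
      have he: "hc G (ext G d h) (\<lambda>x. if x \<in> points ?G' then chg (Vtx p) (Vtx q) x + \<sigma> *
         ((if x = Vtx p then 1 else 0) - (if x = Vtx q then 1 else 0)) else 0)"
        using hc_ext[OF assms(1,3) h] unfolding \<sigma>_def p_def q_def by simp
      have hs: "hc G (\<lambda>x. (1 / (1 - \<sigma>)) * ext G d h x) (\<lambda>x. (1 / (1 - \<sigma>)) * (if x \<in> points ?G' then chg (Vtx p) (Vtx q) x + \<sigma> *
         ((if x = Vtx p then 1 else 0) - (if x = Vtx q then 1 else 0)) else 0))"
        by (rule hc_scale[OF assms(1) he])
      have "hc G (\<lambda>x. (1 / (1 - \<sigma>)) * ext G d h x) (chg (Vtx p) (Vtx q))"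
      proof (rule hc_cong[OF hs])
        fix x assume x: "x \<in> points G"
        have ns: "1 - \<sigma> \<noteq> 0" using sneg by simp
        show "(1 / (1 - \<sigma>)) * (if x \<in> points ?G' then chg (Vtx p) (Vtx q) x + \<sigma> *
         ((if x = Vtx p then 1 else 0) - (if x = Vtx q then 1 else 0)) else 0) = chg (Vtx p) (Vtx q) x"
        proof (cases "x \<in> points ?G'")
          case True
          have "chg (Vtx p) (Vtx q) x + \<sigma> * ((if x = Vtx p then 1 else 0) - (if x = Vtx q then 1 else 0))
             = (1 - \<sigma>) * chg (Vtx p) (Vtx q) x" using pq by (auto simp: chg_def)
          then show ?thesis using True ns by simp
        next
          case False
          then have "x \<noteq> Vtx p" "x \<noteq> Vtx q" using pG' by auto
          then show ?thesis using False by (simp add: chg_def)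
        qed
      qed simp
      then show ?thesis by blast
    qed
  qed
  then show ?thesis unfolding p_def q_def .
qed

lemma exist_step2:
  assumes "wf_graph G" "\<And>d. d \<in> edges G \<Longrightarrow> \<exists>f. hc G f (chg (Vtx (fst (ends G d))) (Vtx (snd (ends G d))))"
    and "(vadj G)\<^sup>*\<^sup>* u w"
  shows "\<exists>f. hc G f (chg (Vtx u) (Vtx w))"
  using assms(3)
proof (induction rule: rtranclp_induct)
  case base then show ?case using hc_refl_chg[of G "Vtx u"] by simp
next
  case (step y z)
  obtain f1 where f1: "hc G f1 (chg (Vtx u) (Vtx y))" using step(3) by blast
  obtain d where d: "d \<in> edges G" "ends G d = (y, z) \<or> ends G d = (z, y)" using step(2) unfolding vadj_def by blast
  have "\<exists>f. hc G f (chg (Vtx y) (Vtx z))"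
    using d(2)
  proof
    assume "ends G d = (y, z)" then show ?thesis using assms(2)[OF d(1)] by simp
  next
    assume "ends G d = (z, y)"
    then have "\<exists>f. hc G f (chg (Vtx z) (Vtx y))" using assms(2)[OF d(1)] by simp
    then show ?thesis using hc_neg_chg[OF assms(1)] by blast
  qed
  then obtain f2 where f2: "hc G f2 (chg (Vtx y) (Vtx z))" by blast
  show ?case by (rule hc_add_chg[OF assms(1) f1 f2])
qed

lemma exist_step3:
  assumes "wf_graph G" "connected_graph G" "\<And>d. d \<in> edges G \<Longrightarrow> \<exists>f. hc G f (chg (Vtx (fst (ends G d))) (Vtx (snd (ends G d))))"
    and "v0 \<in> verts G" "x \<in> points G"
  shows "\<exists>f. hc G f (chg x (Vtx v0))"
  using assms(5)
proof (cases rule: points_cases)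
  case (1 v)
  then show ?thesis using exist_step2[OF assms(1,3) conn_path[OF assms(2) 1(2) assms(4)]] by simp
next
  case (2 d a)
  define p where "p = fst (ends G d)"
  define q where "q = snd (ends G d)"
  define L where "L = len G d"
  have L: "L > 0" using wfD[OF assms(1) 2(2)] L_def by simp
  have pV: "p \<in> verts G" using wfD[OF assms(1) 2(2)] p_def by auto
  obtain f1 where f1: "hc G f1 (chg (Vtx p) (Vtx q))" using assms(3)[OF 2(2)] p_def q_def by blast
  have f1': "hc G (\<lambda>x. (- a / L) * f1 x) (\<lambda>x. (- a / L) * chg (Vtx p) (Vtx q) x)" by (rule hc_scale[OF assms(1) f1])
  have T: "hc G (tent G d a) (\<lambda>x. (if x = Vtx p then (L - a) / L else 0)
     + (if x = Vtx q then a / L else 0) - (if x = Pt d a then 1 else 0))"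
    using tent_hc[OF assms(1) 2(2-4)] unfolding p_def q_def L_def by simp
  have s: "hc G (\<lambda>y. tent G d a y + (- a / L) * f1 y) (\<lambda>y. ((if y = Vtx p then (L - a) / L else 0)
     + (if y = Vtx q then a / L else 0) - (if y = Pt d a then 1 else 0)) + (- a / L) * chg (Vtx p) (Vtx q) y)"
    by (rule hc_add[OF assms(1) T f1'])
  have "hc G (\<lambda>y. tent G d a y + (- a / L) * f1 y) (chg (Pt d a) (Vtx p))"
  proof (rule hc_cong[OF s])
    fix y
    have e: "(L - a) / L + a / L = 1" using L by (simp add: field_simps)
    show "((if y = Vtx p then (L - a) / L else 0) + (if y = Vtx q then a / L else 0) - (if y = Pt d a then 1 else 0))
      + (- a / L) * chg (Vtx p) (Vtx q) y = chg (Pt d a) (Vtx p) y"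
      using e by (auto simp: chg_def)
  qed simp
  then obtain g1 where g1: "hc G g1 (chg (Pt d a) (Vtx p))" by blast
  obtain g2 where g2: "hc G g2 (chg (Vtx p) (Vtx v0))"
    using exist_step2[OF assms(1,3) conn_path[OF assms(2) pV assms(4)]] by blast
  show ?thesis unfolding 2(1) by (rule hc_add_chg[OF assms(1) g1 g2])
qed

lemma exist_hc:
  assumes "wf_graph G" "connected_graph G" "y \<in> points G" "z \<in> points G"
  shows "\<exists>f. hc G f (chg y z)"
  using assms
proof (induction "card (edges G)" arbitrary: G y z rule: less_induct)
  case less
  have S1: "\<exists>f. hc G f (chg (Vtx (fst (ends G d))) (Vtx (snd (ends G d))))" if d: "d \<in> edges G" for d
    by (rule exist_step1[OF less.prems(1,2) d less.hyps]) auto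
  obtain v0 where v0: "v0 \<in> verts G" using less.prems(1) unfolding wf_graph_def by blast
  obtain f1 where f1: "hc G f1 (chg y (Vtx v0))" using exist_step3[OF less.prems(1,2) S1 v0 less.prems(3)] by blast
  obtain f2 where f2: "hc G f2 (chg z (Vtx v0))" using exist_step3[OF less.prems(1,2) S1 v0 less.prems(4)] by blast
  obtain f3 where f3: "hc G f3 (chg (Vtx v0) z)" using hc_neg_chg[OF less.prems(1) f2] by blast
  show ?case by (rule hc_add_chg[OF less.prems(1) f1 f3])
qed

lemma exist_volt:
  assumes "wf_graph G" "connected_graph G" "y \<in> points G" "z \<in> points G"
  obtains f where "is_voltage G y z f" "\<And>x. jv G z x y = f x"
proof -
  obtain f where "hc G f (chg y z)" using exist_hc[OF assms] by blast
  then have v: "is_voltage G y z (\<lambda>x. 1 * f x + (- f z) * ind G x)" by (rule volt_from_hc[OF assms(1) _ assms(4)])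
  show ?thesis by (rule that[OF v jv_eq[OF assms(1,2) v assms(4)]])
qed



lemma chg_sum_gen:
  assumes "finite S" "y \<in> S" "z \<in> S"
  shows "(\<Sum>x\<in>S. h x * chg y z x) = h z - h y"
proof -
  have "(\<Sum>x\<in>S. h x * chg y z x) = (\<Sum>x\<in>S. if x = z then h x else 0) - (\<Sum>x\<in>S. if x = y then h x else 0)"
    unfolding sum_subtractf[symmetric] by (intro sum.cong refl) (simp add: chg_def)
  also have "\<dots> = h z - h y" using assms by (simp add: sum.delta)
  finally show ?thesis .
qed

lemma reciprocity:
  assumes "wf_graph G" "hc G f (chg s t)" "hc G u (chg a b)"
    and "s \<in> points G" "t \<in> points G" "a \<in> points G" "b \<in> points G"
  shows "u t - u s = f b - f a"
proof -
  let ?S = "{s, t, a, b}"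
  have "(\<Sum>x\<in>?S. u x * chg s t x) = (\<Sum>x\<in>?S. f x * chg a b x)"
    by (rule green[OF assms(1-3)]) (use assms(4-7) in \<open>auto simp: chg_def\<close>)
  moreover have "(\<Sum>x\<in>?S. u x * chg s t x) = u t - u s" by (rule chg_sum_gen) auto
  moreover have "(\<Sum>x\<in>?S. f x * chg a b x) = f b - f a" by (rule chg_sum_gen) auto
  ultimately show ?thesis by simp
qed

lemma harmonic_diff:
  assumes "wf_graph G" "connected_graph G" "hc G h c" "\<forall>x\<in>points G. c x = 0"
    and "x \<in> points G" "y \<in> points G"
  shows "h x = h y"
  using harmonic_const[OF assms(1-4)] assms(5,6) by metis

lemma jv_diff:
  assumes "wf_graph H" "connected_graph H" "hc H f (chg s t)"
    and "s \<in> points H" "t \<in> points H" "p \<in> points H" "q \<in> points H"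
  shows "jv H p q s - jv H p q t = f q - f p"
proof -
  obtain ws where ws: "is_voltage H s p ws" "\<And>x. jv H p x s = ws x" using exist_volt[OF assms(1,2,4,6)] by blast
  obtain wt where wt: "is_voltage H t p wt" "\<And>x. jv H p x t = wt x" using exist_volt[OF assms(1,2,5,6)] by blast
  have hs: "hc H ws (chg s p)" "ws p = 0" using ws(1) unfolding is_voltage_hc by auto
  have ht: "hc H wt (chg t p)" "wt p = 0" using wt(1) unfolding is_voltage_hc by auto
  have h1: "hc H (\<lambda>x. 1 * ws x + (-1) * wt x) (\<lambda>x. 1 * chg s p x + (-1) * chg t p x)" by (rule hc_lin[OF assms(1) hs(1) ht(1)])
  have h2: "hc H (\<lambda>x. 1 * (1 * ws x + (-1) * wt x) + (-1) * f x) (\<lambda>x. 1 * (1 * chg s p x + (-1) * chg t p x) + (-1) * chg s t x)"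
    by (rule hc_lin[OF assms(1) h1 assms(3)])
  have z: "\<forall>x\<in>points H. 1 * (1 * chg s p x + (-1) * chg t p x) + (-1) * chg s t x = 0" by (simp add: chg_def)
  have "1 * (1 * ws q + (-1) * wt q) + (-1) * f q = 1 * (1 * ws p + (-1) * wt p) + (-1) * f p"
    by (rule harmonic_diff[OF assms(1,2) h2 z assms(7,6)])
  then show ?thesis using ws(2) wt(2) hs(2) ht(2) by simp
qed

lemma cpt_eq_Vtx:
  assumes "s \<in> points (del_edge G e)" "v \<noteq> fst (ends G e)" "v \<noteq> snd (ends G e)"
  shows "cpt G e s = Vtx v \<longleftrightarrow> s = Vtx v"
  using assms(1)
proof (cases rule: points_cases)
  case (1 w) then show ?thesis using assms(2,3) unfolding cpt_def cmap_def by auto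
next
  case (2 d a) then show ?thesis unfolding cpt_def by simp
qed

lemma cpt_eq_p:
  assumes "s \<in> points (del_edge G e)"
  shows "cpt G e s = Vtx (fst (ends G e)) \<longleftrightarrow> s = Vtx (fst (ends G e)) \<or> s = Vtx (snd (ends G e))"
  using assms(1)
proof (cases rule: points_cases)
  case (1 w) then show ?thesis unfolding cpt_def cmap_def by auto
next
  case (2 d a) then show ?thesis unfolding cpt_def by simp
qed

lemma cpt_eq_Pt:
  assumes "s \<in> points (del_edge G e)"
  shows "cpt G e s = Pt d a \<longleftrightarrow> s = Pt d a"
  using assms(1)
proof (cases rule: points_cases)
  case (1 w) then show ?thesis unfolding cpt_def by simp
next
  case (2 d a) then show ?thesis unfolding cpt_def by simp
qed

lemma reff_eq:
  assumes "wf_graph G" "connected_graph G" "hc G f (chg s t)" "f t = 0" "t \<in> points G"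
  shows "reff G s t = f s"
proof -
  have "is_voltage G s t f" unfolding is_voltage_hc using assms(3,4) by simp
  then show ?thesis unfolding reff_def using jv_eq[OF assms(1,2) _ assms(5)] by simp
qed

lemma contract_formula:
  assumes "wf_graph G" "connected_graph G" "e \<in> edges G"
    and pq: "fst (ends G e) \<noteq> snd (ends G e)"
    and st: "s \<in> points (del_edge G e)" "t \<in> points (del_edge G e)"
    and f: "hc G f (chg s t)" "f t = 0"
    and u: "hc G u (chg (Vtx (snd (ends G e))) (Vtx (fst (ends G e))))" "u (Vtx (fst (ends G e))) = 0"
       "u (Vtx (snd (ends G e))) = \<rho>" "\<rho> > 0"
  shows "reff (contract G e) (cpt G e s) (cpt G e t) =
      f s - (f (Vtx (snd (ends G e))) - f (Vtx (fst (ends G e))))^2 / \<rho>"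
    and "u s - u t = f (Vtx (snd (ends G e))) - f (Vtx (fst (ends G e)))"
proof -
  define p0 where "p0 = fst (ends G e)"
  define q0 where "q0 = snd (ends G e)"
  let ?p = "Vtx p0" and ?q = "Vtx q0"
  let ?Gc = "contract G e"
  have pq': "p0 \<noteq> q0" using pq p0_def q0_def by simp
  have pV: "p0 \<in> verts G" "q0 \<in> verts G" using wfD[OF assms(1,3)] p0_def q0_def by auto
  have pP: "?p \<in> points G" "?q \<in> points G" using pV by (simp_all add: Vtx_points_iff)
  have sG: "s \<in> points G" "t \<in> points G" using points_del_sub[OF st(1)] points_del_sub[OF st(2)] by auto
  have wfc: "wf_graph ?Gc" by (rule wf_con[OF assms(1,3)])
  have cc: "connected_graph ?Gc" by (rule conn_con[OF assms(2)])
  have cs: "cpt G e s \<in> points ?Gc" "cpt G e t \<in> points ?Gc" using cpt_points[OF st(1)] cpt_points[OF st(2)] by auto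
  obtain g where g: "is_voltage ?Gc (cpt G e s) (cpt G e t) g" "\<And>x. jv ?Gc (cpt G e t) x (cpt G e s) = g x"
    using exist_volt[OF wfc cc cs] by blast
  have gh: "hc ?Gc g (chg (cpt G e s) (cpt G e t))" "g (cpt G e t) = 0" using g(1) unfolding is_voltage_hc by auto
  have rc: "reff ?Gc (cpt G e s) (cpt G e t) = g (cpt G e s)" unfolding reff_def using g(2) by simp
  let ?F = "lift G e g"
  have Fb: "cpwl G ?F" "\<forall>x. x \<notin> points G \<longrightarrow> ?F x = 0" using lift_basic[OF assms(1,3) gh(1)] by auto
  have Fh: "hc G ?F (outflux G ?F)" by (rule hc_self[OF Fb])
  note lf = lift_flux[OF assms(1,3) gh(1)]
  define a where "a = outflux G ?F ?q - chg s t ?q"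
  have Fc: "\<forall>x\<in>points G. outflux G ?F x = chg s t x + a * chg ?p ?q x"
  proof
    fix x assume x: "x \<in> points G"
    show "outflux G ?F x = chg s t x + a * chg ?p ?q x"
      using x
    proof (cases rule: points_cases)
      case (1 v)
      consider "v = q0" | "v = p0" | "v \<noteq> p0" "v \<noteq> q0" by blast
      then show ?thesis
      proof cases
        case 1 then show ?thesis unfolding a_def using \<open>x = Vtx v\<close> pq' by (simp add: chg_def)
      next
        case 2
        have e1: "outflux G ?F ?p + outflux G ?F ?q = outflux ?Gc g ?p"
          using lf(2) pq' p0_def q0_def by simp
        have "cmap G e p0 = p0" unfolding p0_def by simp
        then have "p0 \<in> cmap G e ` verts G" using pV(1) by (metis imageI)
        then have "?p \<in> points ?Gc" by (simp add: points_con_Vtx)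
        then have e2: "outflux ?Gc g ?p = chg (cpt G e s) (cpt G e t) ?p"
          using hc_flux[OF gh(1)] by simp
        have i1: "(?p = cpt G e s) \<longleftrightarrow> (s = ?p \<or> s = ?q)" using cpt_eq_p[OF st(1)] p0_def q0_def by auto
        have i2: "(?p = cpt G e t) \<longleftrightarrow> (t = ?p \<or> t = ?q)" using cpt_eq_p[OF st(2)] p0_def q0_def by auto
        have e3: "chg (cpt G e s) (cpt G e t) ?p = chg s t ?p + chg s t ?q"
          unfolding chg_def i1 i2 using pq' by auto
        show ?thesis using e1 e2 e3 2 \<open>x = Vtx v\<close> pq' unfolding a_def by (simp add: chg_def)
      next
        case 3
        have e1: "outflux G ?F (Vtx v) = outflux ?Gc g (Vtx v)" using lf(1) 3 p0_def q0_def by simp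
        have "cmap G e v = v" using 3 q0_def by (simp add: cmap_o)
        then have "v \<in> cmap G e ` verts G" using \<open>v \<in> verts G\<close> by (metis imageI)
        then have "Vtx v \<in> points ?Gc" by (simp add: points_con_Vtx)
        then have e2: "outflux ?Gc g (Vtx v) = chg (cpt G e s) (cpt G e t) (Vtx v)"
          using hc_flux[OF gh(1)] by simp
        have i1: "(Vtx v = cpt G e s) \<longleftrightarrow> (Vtx v = s)" using cpt_eq_Vtx[OF st(1), of v] 3 p0_def q0_def by auto
        have i2: "(Vtx v = cpt G e t) \<longleftrightarrow> (Vtx v = t)" using cpt_eq_Vtx[OF st(2), of v] 3 p0_def q0_def by auto
        have e3: "chg (cpt G e s) (cpt G e t) (Vtx v) = chg s t (Vtx v)"
          unfolding chg_def i1 i2 ..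
        show ?thesis using e1 e2 e3 3 \<open>x = Vtx v\<close> by (simp add: chg_def)
      qed
    next
      case (2 d b)
      show ?thesis
      proof (cases "d = e")
        case True
        have "s \<noteq> x" "t \<noteq> x" using st 2 True by (auto simp: points_del)
        then show ?thesis using lf(5)[of b] 2 True by (simp add: chg_def)
      next
        case False
        have e1: "outflux G ?F (Pt d b) = outflux ?Gc g (Pt d b)" using lf(4)[OF 2(2) False] .
        have e2: "outflux ?Gc g (Pt d b) = chg (cpt G e s) (cpt G e t) (Pt d b)"
          using hc_flux[OF gh(1)] 2 False by (simp add: points_con_Pt)
        have i1: "(Pt d b = cpt G e s) \<longleftrightarrow> (Pt d b = s)" using cpt_eq_Pt[OF st(1), of d b] by auto
        have i2: "(Pt d b = cpt G e t) \<longleftrightarrow> (Pt d b = t)" using cpt_eq_Pt[OF st(2), of d b] by auto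
        have e3: "chg (cpt G e s) (cpt G e t) (Pt d b) = chg s t (Pt d b)"
          unfolding chg_def i1 i2 ..
        show ?thesis using e1 e2 e3 2 by (simp add: chg_def)
      qed
    qed
  qed
  have u': "hc G u (chg ?q ?p)" using u(1) p0_def q0_def by simp
  have h1: "hc G (\<lambda>x. 1 * ?F x + (-1) * f x) (\<lambda>x. 1 * outflux G ?F x + (-1) * chg s t x)"
    by (rule hc_lin[OF assms(1) Fh f(1)])
  have h2: "hc G (\<lambda>x. 1 * (1 * ?F x + (-1) * f x) + a * u x) (\<lambda>x. 1 * (1 * outflux G ?F x + (-1) * chg s t x) + a * chg ?q ?p x)"
    by (rule hc_lin[OF assms(1) h1 u'])
  have z: "\<forall>x\<in>points G. 1 * (1 * outflux G ?F x + (-1) * chg s t x) + a * chg ?q ?p x = 0"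
    using Fc by (simp add: chg_def algebra_simps)
  let ?H = "\<lambda>x. 1 * (1 * ?F x + (-1) * f x) + a * u x"
  have Fp: "?F ?p = g ?p" "?F ?q = g ?p" unfolding lift_def using pP p0_def q0_def by (simp_all add: cmap_def)
  have Fs: "?F s = g (cpt G e s)" "?F t = g (cpt G e t)" using lift_cpt[OF st(1)] lift_cpt[OF st(2)] by auto
  have hpq: "?H ?p = ?H ?q" by (rule harmonic_diff[OF assms(1,2) h2 z pP])
  have hst: "?H s = ?H t" by (rule harmonic_diff[OF assms(1,2) h2 z sG])
  have ua: "u ?p = 0" "u ?q = \<rho>" using u(2,3) p0_def q0_def by auto
  have aeq: "a * \<rho> = f ?q - f ?p" using hpq Fp ua by simp
  have rec: "u s - u t = f ?q - f ?p"
    using reciprocity[OF assms(1) f(1) u' sG pP(2,1)] by simp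
  have "g (cpt G e s) = f s - a * (u s - u t)" using hst Fs gh(2) f(2) by (simp add: algebra_simps)
  also have "\<dots> = f s - (f ?q - f ?p)^2 / \<rho>"
  proof -
    have "a = (f ?q - f ?p) / \<rho>" using aeq u(4) by (simp add: field_simps)
    then show ?thesis unfolding rec by (simp add: power2_eq_square)
  qed
  finally show "reff ?Gc (cpt G e s) (cpt G e t) = f s - (f (Vtx (snd (ends G e))) - f (Vtx (fst (ends G e))))^2 / \<rho>"
    using rc p0_def q0_def by simp
  show "u s - u t = f (Vtx (snd (ends G e))) - f (Vtx (fst (ends G e)))" using rec p0_def q0_def by simp
qed



lemma anchor_in: "wf_graph H \<Longrightarrow> x \<in> points H \<Longrightarrow> anchor H x \<in> verts H"
  by (erule points_cases) (auto simp: anchor_def dest: wfD)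

lemma alg_aux:
  fixes L R A d :: real
  assumes "L > 0" "R > 0" "A > 0"
  shows "A / (L * R) * (d * (L / A))^2 = L / (R * A) * d^2"
proof -
  have "A / (L * R) * (d * (L / A))^2 = (A * L * L) / (L * R * A * A) * d^2"
    by (simp add: power2_eq_square)
  also have "(A * L * L) / (L * R * A * A) = L / (R * A)" using assms by (simp add: field_simps)
  finally show ?thesis .
qed

lemma main_nonbridge:
  fixes G :: "('v,'e) mgraph"
  assumes "metrized_graph G" "e \<in> edges G"
    and st: "s \<in> points (del_edge G e)" "t \<in> points (del_edge G e)"
    and nb: "\<not> is_bridge G e" and pq: "fst (ends G e) \<noteq> snd (ends G e)"
  defines "p \<equiv> Vtx (fst (ends G e))" and "q \<equiv> Vtx (snd (ends G e))" and "L \<equiv> len G e"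
    and "R \<equiv> reff (del_edge G e) (Vtx (fst (ends G e))) (Vtx (snd (ends G e)))"
    and "rc \<equiv> reff (contract G e) (cpt G e s) (cpt G e t)"
  shows "reff G s t = rc + (L + R) / (L * R) * (jv G p q s - jv G p q t)^2"
    and "reff G s t = rc + L / (R * (L + R)) * (jv (del_edge G e) p q s - jv (del_edge G e) p q t)^2"
    and "R > 0" "L > 0"
proof -
  let ?G' = "del_edge G e"
  have wf: "wf_graph G" and cn: "connected_graph G" using assms(1) unfolding metrized_graph_def by auto
  have wf': "wf_graph ?G'" by (rule wf_del[OF wf])
  have cn': "connected_graph ?G'" using nb unfolding is_bridge_def by simp
  have Lp: "L > 0" using wfD[OF wf assms(2)] L_def by simp
  have pV: "fst (ends G e) \<in> verts G" "snd (ends G e) \<in> verts G" using wfD[OF wf assms(2)] by auto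
  have pP: "p \<in> points G" "q \<in> points G" using pV p_def q_def by (simp_all add: Vtx_points_iff)
  have pP': "p \<in> points ?G'" "q \<in> points ?G'" using pV p_def q_def by (simp_all add: Vtx_points_iff)
  have sG: "s \<in> points G" "t \<in> points G" using points_del_sub[OF st(1)] points_del_sub[OF st(2)] by auto
  have pqn: "p \<noteq> q" using pq p_def q_def by simp
  obtain h where h: "is_voltage ?G' p q h" "\<And>x. jv ?G' q x p = h x" using exist_volt[OF wf' cn' pP'] by blast
  have hh: "hc ?G' h (chg p q)" "h q = 0" using h(1) unfolding is_voltage_hc by auto
  have Rh: "R = h p" using h(2)[of p] unfolding R_def reff_def p_def q_def by simp
  have Rp: "R > 0" using resist_pos[OF wf' cn' hh(1) pP' pqn] hh(2) Rh by simp
  define \<sigma> where "\<sigma> = (h q - h p) / L"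
  have sig: "\<sigma> = - R / L" unfolding \<sigma>_def using hh(2) Rh by simp
  have he: "hc G (ext G e h) (\<lambda>x. if x \<in> points ?G' then chg p q x + \<sigma> *
     ((if x = p then 1 else 0) - (if x = q then 1 else 0)) else 0)"
    using hc_ext[OF wf assms(2) hh(1)] unfolding \<sigma>_def p_def q_def L_def by simp
  have LR: "L + R > 0" "L * L + L * R > 0" "L * R > 0" using Lp Rp by (simp_all add: add_pos_pos)
  define \<kappa> where "\<kappa> = L / (L + R)"
  define u where "u x = \<kappa> * (R * ind G x + (-1) * ext G e h x)" for x
  have u1: "hc G (\<lambda>x. R * ind G x + (-1) * ext G e h x) (\<lambda>x. R * 0 + (-1) * (if x \<in> points ?G' then chg p q x + \<sigma> *
     ((if x = p then 1 else 0) - (if x = q then 1 else 0)) else 0))"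
    by (rule hc_lin[OF wf hc_ind[OF wf] he])
  note u2 = hc_scale[OF wf u1, of \<kappa>]
  have uh: "hc G u (chg q p)"
  proof (rule hc_cong[OF u2])
    fix x assume x: "x \<in> points G"
    have k: "\<kappa> * (1 + R / L) = 1" unfolding \<kappa>_def using Lp Rp LR by (simp add: field_simps)
    show "\<kappa> * (R * 0 + (-1) * (if x \<in> points ?G' then chg p q x + \<sigma> *
     ((if x = p then 1 else 0) - (if x = q then 1 else 0)) else 0)) = chg q p x"
    proof (cases "x \<in> points ?G'")
      case True
      have "chg p q x + \<sigma> * ((if x = p then 1 else 0) - (if x = q then 1 else 0)) = - (1 + R / L) * chg q p x"
        unfolding sig using pqn by (auto simp: chg_def)
      moreover have "\<kappa> * (R * 0 + (-1) * (- (1 + R / L) * chg q p x)) = (\<kappa> * (1 + R / L)) * chg q p x"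
        by (simp add: algebra_simps)
      ultimately show ?thesis using True k by simp
    next
      case False
      then have "x \<noteq> p" "x \<noteq> q" using pP' by auto
      then show ?thesis using False by (simp add: chg_def)
    qed
  qed (simp add: u_def)
  have up: "u p = 0" unfolding u_def using ext_points[OF pP'(1)] pP(1) Rh by (simp add: ind_def)
  define \<rho> where "\<rho> = \<kappa> * R"
  have uq: "u q = \<rho>" unfolding u_def \<rho>_def using ext_points[OF pP'(2)] pP(2) hh(2) by (simp add: ind_def)
  have rpos: "\<rho> > 0" unfolding \<rho>_def \<kappa>_def using Lp Rp by simp
  obtain f where f: "is_voltage G s t f" "\<And>x. jv G t x s = f x" using exist_volt[OF wf cn sG] by blast
  have fh: "hc G f (chg s t)" "f t = 0" using f(1) unfolding is_voltage_hc by auto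
  have rG: "reff G s t = f s" by (rule reff_eq[OF wf cn fh sG(2)])
  have CF: "rc = f s - (f q - f p)^2 / \<rho>"
    using contract_formula(1)[OF wf cn assms(2) pq st fh uh[unfolded p_def q_def] up[unfolded p_def] uq[unfolded q_def] rpos]
    unfolding rc_def p_def q_def by simp
  have D: "jv G p q s - jv G p q t = f q - f p" by (rule jv_diff[OF wf cn fh(1) sG pP])
  have inv: "1 / \<rho> = (L + R) / (L * R)" unfolding \<rho>_def \<kappa>_def using Lp Rp LR by (simp add: field_simps)
  show 1: "reff G s t = rc + (L + R) / (L * R) * (jv G p q s - jv G p q t)^2"
    unfolding rG CF D inv[symmetric] by simp
  obtain f' where f': "is_voltage ?G' s t f'" "\<And>x. jv ?G' t x s = f' x" using exist_volt[OF wf' cn' st] by blast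
  have fh': "hc ?G' f' (chg s t)" using f'(1) unfolding is_voltage_hc by auto
  have D': "jv ?G' p q s - jv ?G' p q t = f' q - f' p" by (rule jv_diff[OF wf' cn' fh' st pP'])
  define \<sigma>' where "\<sigma>' = (f' q - f' p) / L"
  have he': "hc G (ext G e f') (\<lambda>x. if x \<in> points ?G' then chg s t x + \<sigma>' *
     ((if x = p then 1 else 0) - (if x = q then 1 else 0)) else 0)"
    using hc_ext[OF wf assms(2) fh'] unfolding \<sigma>'_def p_def q_def L_def by simp
  have c1: "hc G (\<lambda>x. 1 * ext G e f' x + (-1) * f x) (\<lambda>x. 1 * (if x \<in> points ?G' then chg s t x + \<sigma>' *
     ((if x = p then 1 else 0) - (if x = q then 1 else 0)) else 0) + (-1) * chg s t x)"
    by (rule hc_lin[OF wf he' fh(1)])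
  have c2: "hc G (\<lambda>x. 1 * (1 * ext G e f' x + (-1) * f x) + (- \<sigma>') * u x) (\<lambda>x. 1 * (1 * (if x \<in> points ?G' then chg s t x + \<sigma>' *
     ((if x = p then 1 else 0) - (if x = q then 1 else 0)) else 0) + (-1) * chg s t x) + (- \<sigma>') * chg q p x)"
    by (rule hc_lin[OF wf c1 uh])
  have z: "\<forall>x\<in>points G. 1 * (1 * (if x \<in> points ?G' then chg s t x + \<sigma>' *
     ((if x = p then 1 else 0) - (if x = q then 1 else 0)) else 0) + (-1) * chg s t x) + (- \<sigma>') * chg q p x = 0"
  proof
    fix x assume x: "x \<in> points G"
    show "1 * (1 * (if x \<in> points ?G' then chg s t x + \<sigma>' *
     ((if x = p then 1 else 0) - (if x = q then 1 else 0)) else 0) + (-1) * chg s t x) + (- \<sigma>') * chg q p x = 0"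
    proof (cases "x \<in> points ?G'")
      case True then show ?thesis by (simp add: chg_def)
    next
      case False
      then have "x \<noteq> p" "x \<noteq> q" "x \<noteq> s" "x \<noteq> t" using pP' st by auto
      then show ?thesis using False by (simp add: chg_def)
    qed
  qed
  have "1 * (1 * ext G e f' p + (-1) * f p) + (- \<sigma>') * u p = 1 * (1 * ext G e f' q + (-1) * f q) + (- \<sigma>') * u q"
    by (rule harmonic_diff[OF wf cn c2 z pP])
  then have "f' p - f p = f' q - f q - \<sigma>' * \<rho>" using up uq ext_points[OF pP'(1)] ext_points[OF pP'(2)] by simp
  moreover have sr: "\<sigma>' * \<rho> = (f' q - f' p) * (R / (L + R))"
    unfolding \<sigma>'_def \<rho>_def \<kappa>_def using Lp LR by (simp add: field_simps)
  ultimately have "f q - f p = (f' q - f' p) - (f' q - f' p) * (R / (L + R))" by linarith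
  also have "\<dots> = (f' q - f' p) * (L / (L + R))" using LR by (simp add: field_simps)
  finally have DD: "f q - f p = (f' q - f' p) * (L / (L + R))" .
  have "(L + R) / (L * R) * (f q - f p)^2 = L / (R * (L + R)) * (f' q - f' p)^2"
    unfolding DD using alg_aux[OF Lp Rp LR(1)] by simp
  then show "reff G s t = rc + L / (R * (L + R)) * (jv ?G' p q s - jv ?G' p q t)^2"
    using 1 unfolding D D' by simp
  show "R > 0" by (rule Rp)
  show "L > 0" by (rule Lp)
qed



lemma main_loop:
  fixes G :: "('v,'e) mgraph"
  assumes "metrized_graph G" "e \<in> edges G"
    and st: "s \<in> points (del_edge G e)" "t \<in> points (del_edge G e)"
    and pq: "fst (ends G e) = snd (ends G e)"
  shows "reff G s t = reff (contract G e) (cpt G e s) (cpt G e t)"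
    and "reff (del_edge G e) (Vtx (fst (ends G e))) (Vtx (snd (ends G e))) = 0"
    and "jv G (Vtx (fst (ends G e))) (Vtx (snd (ends G e))) s = 0"
    and "jv G (Vtx (fst (ends G e))) (Vtx (snd (ends G e))) t = 0"
proof -
  define p0 where "p0 = fst (ends G e)"
  let ?p = "Vtx p0"
  let ?Gc = "contract G e" and ?G' = "del_edge G e"
  have wf: "wf_graph G" and cn: "connected_graph G" using assms(1) unfolding metrized_graph_def by auto
  have wf': "wf_graph ?G'" by (rule wf_del[OF wf])
  have q0: "snd (ends G e) = p0" using pq p0_def by simp
  have cn': "connected_graph ?G'"
  proof -
    have stp: "(vadj ?G')\<^sup>*\<^sup>* a b" if "vadj G a b" for a b
    proof -
      from vadj_del_or[OF that, of e] show ?thesis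
      proof
        assume "vadj ?G' a b" then show ?thesis by simp
      next
        assume "{a, b} = {fst (ends G e), snd (ends G e)}"
        then have "a = b" using pq by auto
        then show ?thesis by simp
      qed
    qed
    have "(vadj ?G')\<^sup>*\<^sup>* a b" if "(vadj G)\<^sup>*\<^sup>* a b" for a b
      using that
    proof (induction rule: rtranclp_induct)
      case base then show ?case by simp
    next
      case (step y z) show ?case using rtranclp_trans[OF step(3) stp[OF step(2)]] .
    qed
    then show ?thesis using cn unfolding connected_graph_def by simp
  qed
  have pV: "p0 \<in> verts G" using wfD[OF wf assms(2)] p0_def by auto
  have pP: "?p \<in> points G" "?p \<in> points ?G'" using pV by (simp_all add: Vtx_points_iff)
  have sG: "s \<in> points G" "t \<in> points G" using points_del_sub[OF st(1)] points_del_sub[OF st(2)] by auto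
  have wfc: "wf_graph ?Gc" by (rule wf_con[OF wf assms(2)])
  have cc: "connected_graph ?Gc" by (rule conn_con[OF cn])
  have cs: "cpt G e s \<in> points ?Gc" "cpt G e t \<in> points ?Gc" using cpt_points[OF st(1)] cpt_points[OF st(2)] by auto
  obtain g where g: "is_voltage ?Gc (cpt G e s) (cpt G e t) g" "\<And>x. jv ?Gc (cpt G e t) x (cpt G e s) = g x"
    using exist_volt[OF wfc cc cs] by blast
  have gh: "hc ?Gc g (chg (cpt G e s) (cpt G e t))" "g (cpt G e t) = 0" using g(1) unfolding is_voltage_hc by auto
  have rc: "reff ?Gc (cpt G e s) (cpt G e t) = g (cpt G e s)" unfolding reff_def using g(2) by simp
  let ?F = "lift G e g"
  have Fb: "cpwl G ?F" "\<forall>x. x \<notin> points G \<longrightarrow> ?F x = 0" using lift_basic[OF wf assms(2) gh(1)] by auto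
  have Fh: "hc G ?F (outflux G ?F)" by (rule hc_self[OF Fb])
  note lf = lift_flux[OF wf assms(2) gh(1)]
  have FH: "hc G ?F (chg s t)"
  proof (rule hc_cong[OF Fh])
    fix x assume x: "x \<in> points G"
    show "outflux G ?F x = chg s t x"
      using x
    proof (cases rule: points_cases)
      case (1 v)
      show ?thesis
      proof (cases "v = p0")
        case True
        have e1: "outflux G ?F ?p = outflux ?Gc g ?p" using lf(3) pq p0_def by simp
        have "cmap G e p0 = p0" unfolding p0_def by simp
        then have "p0 \<in> cmap G e ` verts G" using pV by (metis imageI)
        then have "?p \<in> points ?Gc" by (simp add: points_con_Vtx)
        then have e2: "outflux ?Gc g ?p = chg (cpt G e s) (cpt G e t) ?p"
          using hc_flux[OF gh(1)] by simp
        have i1: "(?p = cpt G e s) \<longleftrightarrow> (?p = s)" using cpt_eq_p[OF st(1)] p0_def q0 by auto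
        have i2: "(?p = cpt G e t) \<longleftrightarrow> (?p = t)" using cpt_eq_p[OF st(2)] p0_def q0 by auto
        have e3: "chg (cpt G e s) (cpt G e t) ?p = chg s t ?p" unfolding chg_def i1 i2 ..
        show ?thesis using e1 e2 e3 True 1 by simp
      next
        case False
        have e1: "outflux G ?F (Vtx v) = outflux ?Gc g (Vtx v)" using lf(1) False q0 p0_def by simp
        have "cmap G e v = v" using False q0 by (simp add: cmap_o)
        then have "v \<in> cmap G e ` verts G" using \<open>v \<in> verts G\<close> by (metis imageI)
        then have "Vtx v \<in> points ?Gc" by (simp add: points_con_Vtx)
        then have e2: "outflux ?Gc g (Vtx v) = chg (cpt G e s) (cpt G e t) (Vtx v)"
          using hc_flux[OF gh(1)] by simp
        have i1: "(Vtx v = cpt G e s) \<longleftrightarrow> (Vtx v = s)" using cpt_eq_Vtx[OF st(1), of v] False p0_def q0 by auto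
        have i2: "(Vtx v = cpt G e t) \<longleftrightarrow> (Vtx v = t)" using cpt_eq_Vtx[OF st(2), of v] False p0_def q0 by auto
        have e3: "chg (cpt G e s) (cpt G e t) (Vtx v) = chg s t (Vtx v)" unfolding chg_def i1 i2 ..
        show ?thesis using e1 e2 e3 1 by simp
      qed
    next
      case (2 d b)
      show ?thesis
      proof (cases "d = e")
        case True
        have "s \<noteq> x" "t \<noteq> x" using st 2 True by (auto simp: points_del)
        then show ?thesis using lf(5)[of b] 2 True by (simp add: chg_def)
      next
        case False
        have e1: "outflux G ?F (Pt d b) = outflux ?Gc g (Pt d b)" using lf(4)[OF 2(2) False] .
        have e2: "outflux ?Gc g (Pt d b) = chg (cpt G e s) (cpt G e t) (Pt d b)"
          using hc_flux[OF gh(1)] 2 False by (simp add: points_con_Pt)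
        have i1: "(Pt d b = cpt G e s) \<longleftrightarrow> (Pt d b = s)" using cpt_eq_Pt[OF st(1), of d b] by auto
        have i2: "(Pt d b = cpt G e t) \<longleftrightarrow> (Pt d b = t)" using cpt_eq_Pt[OF st(2), of d b] by auto
        have e3: "chg (cpt G e s) (cpt G e t) (Pt d b) = chg s t (Pt d b)" unfolding chg_def i1 i2 ..
        show ?thesis using e1 e2 e3 2 by simp
      qed
    qed
  qed simp
  have Fs: "?F s = g (cpt G e s)" "?F t = g (cpt G e t)" using lift_cpt[OF st(1)] lift_cpt[OF st(2)] by auto
  have "reff G s t = ?F s" by (rule reff_eq[OF wf cn FH _ sG(2)]) (use Fs gh(2) in simp)
  then show "reff G s t = reff ?Gc (cpt G e s) (cpt G e t)" using Fs rc by simp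
  obtain h where h: "is_voltage ?G' ?p ?p h" "\<And>x. jv ?G' ?p x ?p = h x" using exist_volt[OF wf' cn' pP(2) pP(2)] by blast
  have "h ?p = 0" using h(1) unfolding is_voltage_hc by simp
  then show "reff ?G' (Vtx (fst (ends G e))) (Vtx (snd (ends G e))) = 0"
    unfolding reff_def q0 p0_def[symmetric] using h(2) by simp
  obtain ws where ws: "is_voltage G s ?p ws" "\<And>x. jv G ?p x s = ws x" using exist_volt[OF wf cn sG(1) pP(1)] by blast
  have "ws ?p = 0" using ws(1) unfolding is_voltage_hc by simp
  then show "jv G (Vtx (fst (ends G e))) (Vtx (snd (ends G e))) s = 0" unfolding q0 p0_def[symmetric] using ws(2) by simp
  obtain wt where wt: "is_voltage G t ?p wt" "\<And>x. jv G ?p x t = wt x" using exist_volt[OF wf cn sG(2) pP(1)] by blast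
  have "wt ?p = 0" using wt(1) unfolding is_voltage_hc by simp
  then show "jv G (Vtx (fst (ends G e))) (Vtx (snd (ends G e))) t = 0" unfolding q0 p0_def[symmetric] using wt(2) by simp
qed

lemma main_bridge:
  fixes G :: "('v,'e) mgraph"
  assumes "metrized_graph G" "e \<in> edges G"
    and st: "s \<in> points (del_edge G e)" "t \<in> points (del_edge G e)"
    and br: "is_bridge G e"
  shows "same_comp (del_edge G e) s t \<Longrightarrow> reff G s t = reff (contract G e) (cpt G e s) (cpt G e t)"
    and "\<not> same_comp (del_edge G e) s t \<Longrightarrow> reff G s t = reff (contract G e) (cpt G e s) (cpt G e t) + len G e"
proof -
  let ?G' = "del_edge G e"
  have wf: "wf_graph G" and cn: "connected_graph G" using assms(1) unfolding metrized_graph_def by auto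
  have wf': "wf_graph ?G'" by (rule wf_del[OF wf])
  note bp = bridge_props[OF wf cn assms(2) br]
  note bf = bfun_hc[OF wf cn assms(2) br]
  have Lp: "len G e > 0" using wfD[OF wf assms(2)] by simp
  have sG: "s \<in> points G" "t \<in> points G" using points_del_sub[OF st(1)] points_del_sub[OF st(2)] by auto
  obtain f where f: "is_voltage G s t f" "\<And>x. jv G t x s = f x" using exist_volt[OF wf cn sG] by blast
  have fh: "hc G f (chg s t)" "f t = 0" using f(1) unfolding is_voltage_hc by auto
  have rG: "reff G s t = f s" by (rule reff_eq[OF wf cn fh sG(2)])
  note CF = contract_formula[OF wf cn assms(2) bp(3) st fh bf(1) bf(2) bf(3) Lp]
  define \<Delta> where "\<Delta> = f (Vtx (snd (ends G e))) - f (Vtx (fst (ends G e)))"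
  have rc: "reff (contract G e) (cpt G e s) (cpt G e t) = reff G s t - \<Delta>^2 / len G e"
    using CF(1) rG unfolding \<Delta>_def by simp
  have us: "bfun G e s - bfun G e t = \<Delta>" using CF(2) unfolding \<Delta>_def .
  have aV: "anchor ?G' s \<in> verts G" "anchor ?G' t \<in> verts G" using anchor_in[OF wf' st(1)] anchor_in[OF wf' st(2)] by auto
  have sc: "same_comp ?G' s t \<longleftrightarrow> (bside G e (anchor ?G' s) \<longleftrightarrow> bside G e (anchor ?G' t))"
    unfolding same_comp_def using bp(4)[OF aV] .
  show "reff G s t = reff (contract G e) (cpt G e s) (cpt G e t)" if "same_comp ?G' s t"
  proof -
    have "\<Delta> = 0" using us bf(4)[OF st(1)] bf(4)[OF st(2)] that sc by auto
    then show ?thesis using rc by simp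
  qed
  show "reff G s t = reff (contract G e) (cpt G e s) (cpt G e t) + len G e" if "\<not> same_comp ?G' s t"
  proof -
    have "\<Delta> = len G e \<or> \<Delta> = - len G e" using us bf(4)[OF st(1)] bf(4)[OF st(2)] that sc by auto
    then have "\<Delta>^2 = len G e * len G e" by (auto simp: power2_eq_square)
    then have "\<Delta>^2 / len G e = len G e" using Lp by simp
    then show ?thesis using rc by simp
  qed
qed

theorem theorem3p3:
  fixes G :: "('v, 'e) mgraph" and e :: 'e and s t :: "('v, 'e) pt"
  assumes "metrized_graph G" and "e \<in> edges G"
    and "s \<in> points (del_edge G e)" and "t \<in> points (del_edge G e)"
  shows "let p = Vtx (fst (ends G e)); q = Vtx (snd (ends G e)); L = len G e;
             R = reff (del_edge G e) p q; Gc = contract G e;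
             rc = reff Gc (cpt G e s) (cpt G e t) in
         (\<not> is_bridge G e \<longrightarrow>
            reff G s t = rc + (L + R) / (L * R) * (jv G p q s - jv G p q t)^2
          \<and> reff G s t = rc + L / (R * (L + R)) * (jv (del_edge G e) p q s - jv (del_edge G e) p q t)^2
          \<and> reff G s t \<ge> rc
          \<and> (reff G s t = rc \<longleftrightarrow> jv G p q s = jv G p q t))
       \<and> (is_bridge G e \<longrightarrow>
            (same_comp (del_edge G e) s t \<longrightarrow> reff G s t = rc)
          \<and> (\<not> same_comp (del_edge G e) s t \<longrightarrow> reff G s t = rc + L))"
  unfolding Let_def
proof (intro conjI impI)
  let ?p = "Vtx (fst (ends G e))" and ?q = "Vtx (snd (ends G e))" and ?L = "len G e"
  let ?R = "reff (del_edge G e) ?p ?q" and ?rc = "reff (contract G e) (cpt G e s) (cpt G e t)"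
  assume nb: "\<not> is_bridge G e"
  have goals: "?rc \<le> reff G s t \<and> (reff G s t = ?rc \<longleftrightarrow> jv G ?p ?q s = jv G ?p ?q t) \<and>
      reff G s t = ?rc + (?L + ?R) / (?L * ?R) * (jv G ?p ?q s - jv G ?p ?q t)^2 \<and>
      reff G s t = ?rc + ?L / (?R * (?L + ?R)) * (jv (del_edge G e) ?p ?q s - jv (del_edge G e) ?p ?q t)^2"
  proof (cases "fst (ends G e) = snd (ends G e)")
    case True
    note ml = main_loop[OF assms True]
    show ?thesis using ml by simp
  next
    case False
    note mn = main_nonbridge[OF assms nb False]
    have c: "(?L + ?R) / (?L * ?R) > 0" using mn(3,4) by (simp add: add_pos_pos)
    have nn: "(?L + ?R) / (?L * ?R) * (jv G ?p ?q s - jv G ?p ?q t)^2 \<ge> 0"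
      by (rule mult_nonneg_nonneg[OF less_imp_le[OF c] zero_le_power2])
    have "(?L + ?R) / (?L * ?R) * (jv G ?p ?q s - jv G ?p ?q t)^2 = 0 \<longleftrightarrow> jv G ?p ?q s = jv G ?p ?q t"
      using c by (simp only: mult_eq_0_iff power_eq_0_iff right_minus_eq less_irrefl) auto
    then show ?thesis using mn(1,2) nn by linarith
  qed
  show "reff G s t = ?rc + (?L + ?R) / (?L * ?R) * (jv G ?p ?q s - jv G ?p ?q t)^2" using goals by blast
  show "reff G s t = ?rc + ?L / (?R * (?L + ?R)) * (jv (del_edge G e) ?p ?q s - jv (del_edge G e) ?p ?q t)^2" using goals by blast
  show "?rc \<le> reff G s t" using goals by blast
  show "reff G s t = ?rc \<longleftrightarrow> jv G ?p ?q s = jv G ?p ?q t" using goals by blast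
next
  assume br: "is_bridge G e"
  note mb = main_bridge[OF assms br]
  show "reff G s t = reff (contract G e) (cpt G e s) (cpt G e t)" if "same_comp (del_edge G e) s t" using mb(1) that .
  show "reff G s t = reff (contract G e) (cpt G e s) (cpt G e t) + len G e" if "\<not> same_comp (del_edge G e) s t" using mb(2) that .
qed


end
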